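(* Assume in addition that $f:C(\Omega)\to C(\Omega)$ is continuously (Fréchet) differentiable. Then $D(\widehat\tau)$ is an open subset of $BUC_\alpha\times C(\Omega)$ and the map $\widehat\tau:D(\widehat\tau)\to C(\Omega)$ is continuously differentiable.
   Context: $\Omega\subset\mathbb R^n$ compact, $C(\Omega)$ with sup norm, $\alpha\ge0$ fixed. $f:C(\Omega)\to C(\Omega)$ is Lipschitz, $0<f(\phi)(x)\le M_f$ for a constant $M_f$, and non-increasing for the pointwise order. $BUC_\alpha$ is the Banach space of $\phi\in C((-\infty,0],C(\Omega))$ with $t\mapsto e^{-\alpha|t|}\phi(t,\cdot)$ bounded and uniformly continuous, norm $\sup_{t\le0}e^{-\alpha|t|}\|\phi(t,\cdot)\|_\infty$. For $\phi\in BUC_\alpha$, $\overline\phi(s)=\phi(s)$ for $s\le0$, $\overline\phi(s)=\phi(0)$ for $s\ge0$. $D(\widehat\tau)=\{(\phi,\delta)\in BUC_\alpha\times C(\Omega):\delta(x)<\int_{-\infty}^0f(\phi(s,\cdot))(x)ds$ whenever $\delta(x)>0\}$, and for $(\phi,\delta)\in D(\widehat\tau)$, $\widehat\tau(\phi,\delta)\in C(\Omega)$ is the unique function with $\int_{-\widehat\tau(\phi,\delta)(x)}^0f(\overline\phi(s,\cdot))(x)ds=\delta(x)$ for all $x\in\Omega$. *)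

theory Defs
  imports "HOL-Analysis.Analysis"
begin

text \<open>C(Omega) is modelled as the Banach space of (bounded) continuous real functions
on a compact space 'a, with the sup norm. A history phi in BUC_alpha is modelled
as a function real => C(Omega) whose values for t > 0 are fixed to 0.\<close>

type_synonym 'a hist = "real \<Rightarrow> ('a, real) bcontfun"

definition BUC :: "real \<Rightarrow> ('a::metric_space) hist set" where
  "BUC \<alpha> = {\<phi>. (\<forall>t>0. \<phi> t = 0) \<and> continuous_on {..0} \<phi> \<and>
     bounded ((\<lambda>t. exp (- \<alpha> * \<bar>t\<bar>) *\<^sub>R \<phi> t) ` {..0}) \<and>
     uniformly_continuous_on {..0} (\<lambda>t. exp (- \<alpha> * \<bar>t\<bar>) *\<^sub>R \<phi> t)}"

definition buc_norm :: "real \<Rightarrow> ('a::metric_space) hist \<Rightarrow> real" where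
  "buc_norm \<alpha> \<phi> = (SUP t\<in>{..0}. exp (- \<alpha> * \<bar>t\<bar>) * norm (\<phi> t))"

definition Xsp :: "real \<Rightarrow> (('a::metric_space) hist \<times> ('a, real) bcontfun) set" where
  "Xsp \<alpha> = BUC \<alpha> \<times> UNIV"

definition pnorm :: "real \<Rightarrow> ('a::metric_space) hist \<times> ('a, real) bcontfun \<Rightarrow> real" where
  "pnorm \<alpha> p = buc_norm \<alpha> (fst p) + norm (snd p)"

definition padd :: "('a::metric_space) hist \<times> ('a, real) bcontfun \<Rightarrow> 'a hist \<times> ('a, real) bcontfun
    \<Rightarrow> 'a hist \<times> ('a, real) bcontfun" where
  "padd p q = ((\<lambda>t. fst p t + fst q t), snd p + snd q)"

definition pminus :: "('a::metric_space) hist \<times> ('a, real) bcontfun \<Rightarrow> 'a hist \<times> ('a, real) bcontfun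
    \<Rightarrow> 'a hist \<times> ('a, real) bcontfun" where
  "pminus p q = ((\<lambda>t. fst p t - fst q t), snd p - snd q)"

definition pscale :: "real \<Rightarrow> ('a::metric_space) hist \<times> ('a, real) bcontfun \<Rightarrow> 'a hist \<times> ('a, real) bcontfun" where
  "pscale c p = ((\<lambda>t. c *\<^sub>R fst p t), c *\<^sub>R snd p)"

definition open_X :: "real \<Rightarrow> (('a::metric_space) hist \<times> ('a, real) bcontfun) set \<Rightarrow> bool" where
  "open_X \<alpha> U \<longleftrightarrow> U \<subseteq> Xsp \<alpha> \<and>
     (\<forall>p\<in>U. \<exists>e>0. \<forall>q\<in>Xsp \<alpha>. pnorm \<alpha> (pminus q p) < e \<longrightarrow> q \<in> U)"

definition bounded_linear_X :: "real \<Rightarrow> (('a::metric_space) hist \<times> ('a, real) bcontfun \<Rightarrow> ('a, real) bcontfun) \<Rightarrow> bool" where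
  "bounded_linear_X \<alpha> L \<longleftrightarrow>
     (\<forall>p\<in>Xsp \<alpha>. \<forall>q\<in>Xsp \<alpha>. L (padd p q) = L p + L q) \<and>
     (\<forall>c. \<forall>p\<in>Xsp \<alpha>. L (pscale c p) = c *\<^sub>R L p) \<and>
     (\<exists>K. \<forall>p\<in>Xsp \<alpha>. norm (L p) \<le> K * pnorm \<alpha> p)"

definition opnorm_X :: "real \<Rightarrow> (('a::metric_space) hist \<times> ('a, real) bcontfun \<Rightarrow> ('a, real) bcontfun) \<Rightarrow> real" where
  "opnorm_X \<alpha> L = (SUP p\<in>{p\<in>Xsp \<alpha>. pnorm \<alpha> p \<le> 1}. norm (L p))"

definition frechet_X :: "real \<Rightarrow> (('a::metric_space) hist \<times> ('a, real) bcontfun \<Rightarrow> ('a, real) bcontfun)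
   \<Rightarrow> ('a hist \<times> ('a, real) bcontfun) set \<Rightarrow> 'a hist \<times> ('a, real) bcontfun
   \<Rightarrow> ('a hist \<times> ('a, real) bcontfun \<Rightarrow> ('a, real) bcontfun) \<Rightarrow> bool" where
  "frechet_X \<alpha> F U p L \<longleftrightarrow> bounded_linear_X \<alpha> L \<and>
     (\<forall>\<epsilon>>0. \<exists>\<delta>>0. \<forall>q\<in>U. pnorm \<alpha> (pminus q p) < \<delta> \<longrightarrow>
        norm (F q - F p - L (pminus q p)) \<le> \<epsilon> * pnorm \<alpha> (pminus q p))"

definition C1_on_X :: "real \<Rightarrow> (('a::metric_space) hist \<times> ('a, real) bcontfun \<Rightarrow> ('a, real) bcontfun)
   \<Rightarrow> ('a hist \<times> ('a, real) bcontfun) set \<Rightarrow> bool" where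
  "C1_on_X \<alpha> F U \<longleftrightarrow> (\<exists>L. (\<forall>p\<in>U. frechet_X \<alpha> F U p (L p)) \<and>
     (\<forall>p\<in>U. \<forall>\<epsilon>>0. \<exists>\<delta>>0. \<forall>q\<in>U. pnorm \<alpha> (pminus q p) < \<delta> \<longrightarrow>
        opnorm_X \<alpha> (\<lambda>h. L q h - L p h) \<le> \<epsilon>))"

definition phibar :: "('a::metric_space) hist \<Rightarrow> 'a hist" where
  "phibar \<phi> s = (if s \<le> 0 then \<phi> s else \<phi> 0)"

text \<open>The domain D(tau-hat).  The integral over (-infinity,0] of the positive integrand is
  taken as an extended nonnegative Lebesgue integral (it may be infinite).\<close>
definition Dtau :: "(('a::metric_space, real) bcontfun \<Rightarrow> ('a, real) bcontfun) \<Rightarrow> real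
    \<Rightarrow> ('a hist \<times> ('a, real) bcontfun) set" where
  "Dtau f \<alpha> = {(\<phi>, \<delta>). \<phi> \<in> BUC \<alpha> \<and>
     (\<forall>x. 0 < apply_bcontfun \<delta> x \<longrightarrow>
        ennreal (apply_bcontfun \<delta> x) <
          set_nn_integral lborel {..0} (\<lambda>s. ennreal (apply_bcontfun (f (\<phi> s)) x)))}"

definition tauhat :: "(('a::metric_space, real) bcontfun \<Rightarrow> ('a, real) bcontfun)
    \<Rightarrow> 'a hist \<Rightarrow> ('a, real) bcontfun \<Rightarrow> ('a, real) bcontfun" where
  "tauhat f \<phi> \<delta> = (THE \<tau>. \<forall>x.
     interval_lebesgue_integral lborel (ereal (- apply_bcontfun \<tau> x)) (ereal 0)
       (\<lambda>s. apply_bcontfun (f (phibar \<phi> s)) x) = apply_bcontfun \<delta> x)"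

end

theory Submission
  imports Defs
begin


lemma deriv_bound_seg:
  fixes g g' :: "real \<Rightarrow> real"
  assumes d: "\<And>u. min a b \<le> u \<Longrightarrow> u \<le> max a b \<Longrightarrow> (g has_real_derivative g' u) (at u)"
    and B: "\<And>u. min a b \<le> u \<Longrightarrow> u \<le> max a b \<Longrightarrow> \<bar>g' u\<bar> \<le> B"
  shows "\<bar>g b - g a\<bar> \<le> B * \<bar>b - a\<bar>"
proof (cases a b rule: linorder_cases)
  case less
  then obtain z where z: "a < z" "z < b" "g b - g a = (b - a) * g' z"
    using MVT2[of a b g g'] d by (auto simp: min_def max_def)
  have "\<bar>g' z\<bar> \<le> B" using B z less by (auto simp: min_def max_def)
  then show ?thesis using z less by (simp add: abs_mult mult.commute mult_right_mono)
next
  case equal then show ?thesis by simp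
next
  case greater
  then obtain z where z: "b < z" "z < a" "g a - g b = (a - b) * g' z"
    using MVT2[of b a g g'] d by (auto simp: min_def max_def)
  have "\<bar>g' z\<bar> \<le> B" using B z greater by (auto simp: min_def max_def)
  then show ?thesis using z greater
    by (simp add: abs_mult mult.commute mult_right_mono abs_minus_commute)
qed

lemma deriv_lower_seg:
  fixes g g' :: "real \<Rightarrow> real"
  assumes ab: "a \<le> b"
    and d: "\<And>u. a \<le> u \<Longrightarrow> u \<le> b \<Longrightarrow> (g has_real_derivative g' u) (at u)"
    and c: "\<And>u. a \<le> u \<Longrightarrow> u \<le> b \<Longrightarrow> c \<le> g' u"
  shows "c * (b - a) \<le> g b - g a"
proof (cases "a = b")
  case True then show ?thesis by simp
next
  case False
  then have less: "a < b" using ab by simp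
  then obtain z where z: "a < z" "z < b" "g b - g a = (b - a) * g' z"
    using MVT2[of a b g g'] d by auto
  have "c \<le> g' z" using c z by auto
  then show ?thesis using z less by (simp add: mult.commute mult_right_mono)
qed

lemma unif_cont_near_compact:
  fixes g :: "'a::metric_space \<Rightarrow> 'b::metric_space"
  assumes cont: "continuous_on UNIV g" and C: "compact C" and e: "e > 0"
  shows "\<exists>d>0. \<forall>z\<in>C. \<forall>y. dist y z < d \<longrightarrow> dist (g y) (g z) < e"
proof -
  define \<G> where "\<G> = (\<lambda>c. {w. dist (g w) (g c) < e/2}) ` C"
  have opn: "open G" if GG: "G \<in> \<G>" for G
  proof -
    obtain c where G: "G = {w. dist (g w) (g c) < e/2}" using GG unfolding \<G>_def by blast
    have "open {w. dist (g w) (g c) < e/2}"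
      using cont by (intro open_Collect_less continuous_intros) (auto simp: continuous_on_eq_continuous_at)
    then show ?thesis using G by simp
  qed
  have sub: "C \<subseteq> \<Union>\<G>" using e by (auto simp: \<G>_def)
  obtain d where d: "0 < d" "\<And>x. x \<in> C \<Longrightarrow> \<exists>G \<in> \<G>. ball x d \<subseteq> G"
    using Heine_Borel_lemma[OF C sub opn] by blast
  have "\<forall>z\<in>C. \<forall>y. dist y z < d \<longrightarrow> dist (g y) (g z) < e"
  proof (intro ballI allI impI)
    fix z y assume z: "z \<in> C" and y: "dist y z < d"
    obtain G where G: "G \<in> \<G>" "ball z d \<subseteq> G" using d z by blast
    obtain c where Gc: "G = {w. dist (g w) (g c) < e/2}" using G unfolding \<G>_def by blast
    have "z \<in> G" "y \<in> G" using G y d by (auto simp: dist_commute)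
    then have "dist (g z) (g c) < e/2" "dist (g y) (g c) < e/2" using Gc by auto
    then show "dist (g y) (g z) < e"
      using dist_triangle[of "g y" "g z" "g c"] dist_commute[of "g c" "g z"] by linarith
  qed
  then show ?thesis using d by blast
qed

lemma bl_eval: "bounded_linear (\<lambda>F::('a::topological_space, real) bcontfun. apply_bcontfun F x)"
  by (rule bounded_linear_intro[where K=1]) (auto simp: norm_bounded[where 'b=real, simplified])

lemma eval_cont: "continuous_on S K \<Longrightarrow>
   continuous_on S (\<lambda>s. apply_bcontfun (K s :: ('a::topological_space, real) bcontfun) x)"
  using continuous_on_compose[of S K "\<lambda>F. apply_bcontfun F x"]
    bounded_linear.continuous_on[OF bl_eval[of x], of "K ` S" "\<lambda>F. F"]
  by (simp add: o_def continuous_on_id)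

lemma abs_eval_le: "\<bar>apply_bcontfun (F::('a::topological_space, real) bcontfun) x\<bar> \<le> norm F"
  using norm_bounded[of F x] by simp

lemma app_cont: "continuous_on UNIV (\<lambda>p::(('a::metric_space, real) bcontfun \<times> 'a). apply_bcontfun (fst p) (snd p))"
  unfolding continuous_on_iff
proof (intro ballI allI impI)
  fix p :: "('a, real) bcontfun \<times> 'a" and e :: real assume e: "e > 0"
  obtain F0 x0 where p: "p = (F0, x0)" by (cases p)
  have "continuous_on UNIV (apply_bcontfun F0)" by simp
  then obtain d where d: "d > 0" "\<And>x. dist x x0 < d \<Longrightarrow> dist (F0 x) (F0 x0) < e/2"
    using e unfolding continuous_on_iff by (metis UNIV_I half_gt_zero)
  show "\<exists>d>0. \<forall>q\<in>UNIV. dist q p < d \<longrightarrow> dist (apply_bcontfun (fst q) (snd q)) (apply_bcontfun (fst p) (snd p)) < e"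
  proof (intro exI[of _ "min d (e/2)"] conjI ballI impI)
    show "min d (e/2) > 0" using d e by simp
    fix q :: "('a, real) bcontfun \<times> 'a" assume q: "dist q p < min d (e/2)"
    obtain F x where qq: "q = (F, x)" by (cases q)
    have "dist F F0 \<le> dist q p" "dist x x0 \<le> dist q p" using p qq
      by (auto simp: dist_Pair_Pair intro: real_sqrt_sum_squares_ge1 real_sqrt_sum_squares_ge2)
    then have 1: "dist F F0 < e/2" "dist x x0 < d" using q by auto
    have "dist (F x) (F0 x) \<le> dist F F0" by (rule dist_bounded)
    then have "dist (F x) (F0 x0) < e"
      using dist_triangle[of "F x" "F0 x0" "F0 x"] 1 d(2)[of x] by linarith
    then show "dist (apply_bcontfun (fst q) (snd q)) (apply_bcontfun (fst p) (snd p)) < e"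
      using p qq by simp
  qed
qed

lemma kernel_joint_cont:
  assumes "continuous_on UNIV (K :: real \<Rightarrow> ('a::metric_space, real) bcontfun)"
  shows "continuous_on UNIV (\<lambda>p::real\<times>'a. apply_bcontfun (K (fst p)) (snd p))"
proof -
  have "continuous_on UNIV (\<lambda>p::real\<times>'a. (K (fst p), snd p))"
    by (intro continuous_intros continuous_on_compose2[OF assms]) auto
  then show ?thesis
    using continuous_on_compose2[OF app_cont, of UNIV "\<lambda>p::real\<times>'a. (K (fst p), snd p)"]
    by auto
qed

lemma kernel_comp_cont:
  assumes "continuous_on UNIV (K :: real \<Rightarrow> ('a::metric_space, real) bcontfun)"
    and "continuous_on UNIV \<tau>"
  shows "continuous_on UNIV (\<lambda>x. apply_bcontfun (K (\<tau> x)) x)"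
proof -
  have "continuous_on UNIV (\<lambda>x. (\<tau> x, x))"
    by (intro continuous_intros assms)
  then show ?thesis
    using continuous_on_compose2[OF kernel_joint_cont[OF assms(1)], of UNIV "\<lambda>x. (\<tau> x, x)"]
    by auto
qed

definition PK :: "(real \<Rightarrow> ('a::metric_space, real) bcontfun) \<Rightarrow> 'a \<Rightarrow> real \<Rightarrow> real" where
  "PK K x t = interval_lebesgue_integral lborel (ereal (- t)) (ereal 0) (\<lambda>s. apply_bcontfun (K s) x)"

lemma FTC_at:
  fixes g :: "real \<Rightarrow> real"
  assumes "continuous_on UNIV g"
  shows "((\<lambda>u. interval_lebesgue_integral lborel (ereal 0) (ereal u) g) has_real_derivative g v) (at v)"
proof -
  define a where "a = min 0 v - 1"
  define b where "b = max 0 v + 1"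
  have "((\<lambda>u. interval_lebesgue_integral lborel (ereal 0) (ereal u) g) has_vector_derivative (g v)) (at v within {a..b})"
    by (rule interval_integral_FTC2[where c=0]) (auto simp: a_def b_def intro: continuous_on_subset[OF assms])
  then have "((\<lambda>u. interval_lebesgue_integral lborel (ereal 0) (ereal u) g) has_vector_derivative (g v)) (at v within {a<..<b})"
    by (rule has_vector_derivative_within_subset) auto
  then have "((\<lambda>u. interval_lebesgue_integral lborel (ereal 0) (ereal u) g) has_vector_derivative (g v)) (at v)"
    by (subst (asm) has_vector_derivative_within_open) (auto simp: a_def b_def)
  then show ?thesis
    by (simp add: has_real_derivative_iff_has_vector_derivative)
qed

lemma PK_alt: "PK K x t = - interval_lebesgue_integral lborel (ereal 0) (ereal (-t)) (\<lambda>s. apply_bcontfun (K s) x)"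
  unfolding PK_def by (rule interval_integral_endpoints_reverse)

lemma PK_deriv:
  assumes "continuous_on UNIV K"
  shows "((\<lambda>t. PK K x t) has_real_derivative apply_bcontfun (K (-t)) x) (at t)"
proof -
  have g: "continuous_on UNIV (\<lambda>s. apply_bcontfun (K s) x)" by (rule eval_cont[OF assms])
  have "((\<lambda>u. interval_lebesgue_integral lborel (ereal 0) (ereal u) (\<lambda>s. apply_bcontfun (K s) x))
        has_real_derivative apply_bcontfun (K (-t)) x) (at (-t))"
    by (rule FTC_at[OF g])
  then have "((\<lambda>t. interval_lebesgue_integral lborel (ereal 0) (ereal (-t)) (\<lambda>s. apply_bcontfun (K s) x))
        has_real_derivative - apply_bcontfun (K (-t)) x) (at t)"
    using DERIV_mirror[of "\<lambda>u. interval_lebesgue_integral lborel (ereal 0) (ereal u) (\<lambda>s. apply_bcontfun (K s) x)" "apply_bcontfun (K (-t)) x" t] by simp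
  then have "((\<lambda>t. - interval_lebesgue_integral lborel (ereal 0) (ereal (-t)) (\<lambda>s. apply_bcontfun (K s) x))
        has_real_derivative apply_bcontfun (K (-t)) x) (at t)"
    using DERIV_minus by fastforce
  then show ?thesis by (simp add: PK_alt)
qed

lemma PK_zero: "PK K x 0 = 0"
  by (simp add: PK_def interval_lebesgue_integral_def einterval_same set_lebesgue_integral_def)

lemma PK_lip:
  assumes K: "continuous_on UNIV K"
    and B: "\<And>u. min a b \<le> u \<Longrightarrow> u \<le> max a b \<Longrightarrow> \<bar>apply_bcontfun (K (-u)) x\<bar> \<le> B"
  shows "\<bar>PK K x b - PK K x a\<bar> \<le> B * \<bar>b - a\<bar>"
  by (rule deriv_bound_seg[OF PK_deriv[OF K] B])

lemma compact_kernel_bound: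
  assumes "continuous_on UNIV (K :: real \<Rightarrow> ('a::metric_space, real) bcontfun)"
  shows "\<exists>B>0. \<forall>s\<in>{a..b}. norm (K s) \<le> B"
proof -
  have "compact (K ` {a..b})"
    by (rule compact_continuous_image[OF continuous_on_subset[OF assms]]) auto
  then have "bounded (K ` {a..b})" by (rule compact_imp_bounded)
  then obtain B where "B > 0" "\<forall>y\<in>K ` {a..b}. norm y \<le> B" by (auto simp: bounded_pos)
  then show ?thesis by auto
qed

lemma PK_cont:
  assumes cpt: "compact (UNIV :: 'a::metric_space set)"
    and K: "continuous_on UNIV (K :: real \<Rightarrow> ('a, real) bcontfun)"
    and tau: "continuous_on UNIV \<tau>"
  shows "continuous_on UNIV (\<lambda>x. PK K x (\<tau> x))"
  unfolding continuous_on_iff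
proof (intro ballI allI impI)
  fix x0 :: 'a and e :: real assume e: "e > 0"
  define t0 where "t0 = \<tau> x0"
  define R where "R = \<bar>t0\<bar> + 1"
  have R: "R > 0" "\<bar>t0\<bar> < R" by (auto simp: R_def)
  obtain B where B: "B > 0" "\<And>s. s \<in> {-R..R} \<Longrightarrow> norm (K s) \<le> B"
    using compact_kernel_bound[OF K, of "-R" R] by blast
  obtain d1 where d1: "d1 > 0" "\<And>x. dist x x0 < d1 \<Longrightarrow> dist (\<tau> x) (\<tau> x0) < min 1 (e/(2*B))"
    using tau e B unfolding continuous_on_iff by (metis UNIV_I divide_pos_pos min_less_iff_conj zero_less_mult_iff zero_less_numeral zero_less_one)
  define \<Phi> where "\<Phi> = (\<lambda>p::real\<times>'a. apply_bcontfun (K (fst p)) (snd p))"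
  have \<Phi>c: "continuous_on UNIV \<Phi>" unfolding \<Phi>_def by (rule kernel_joint_cont[OF K])
  have C: "compact ({-R..R} \<times> {x0})" by (intro compact_Times) auto
  obtain d2 where d2: "d2 > 0" "\<And>z y. z \<in> {-R..R} \<times> {x0} \<Longrightarrow> dist y z < d2 \<Longrightarrow> dist (\<Phi> y) (\<Phi> z) < e/(2*R)"
    using unif_cont_near_compact[OF \<Phi>c C, of "e/(2*R)"] e R by auto
  show "\<exists>d>0. \<forall>x'\<in>UNIV. dist x' x0 < d \<longrightarrow> dist (PK K x' (\<tau> x')) (PK K x0 (\<tau> x0)) < e"
  proof (intro exI[of _ "min d1 d2"] conjI ballI impI)
    show "min d1 d2 > 0" using d1 d2 by simp
    fix x assume x: "dist x x0 < min d1 d2"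
    have tx: "\<bar>\<tau> x - t0\<bar> < 1" "\<bar>\<tau> x - t0\<bar> < e/(2*B)"
      using d1(2)[of x] x by (auto simp: t0_def dist_real_def)
    have 1: "\<bar>PK K x (\<tau> x) - PK K x t0\<bar> \<le> B * \<bar>\<tau> x - t0\<bar>"
    proof (rule PK_lip[OF K])
      fix u assume "min t0 (\<tau> x) \<le> u" "u \<le> max t0 (\<tau> x)"
      then have "-u \<in> {-R..R}" using tx R by (auto simp: R_def)
      then show "\<bar>apply_bcontfun (K (- u)) x\<bar> \<le> B"
        using B(2) abs_eval_le[of "K (-u)" x] by fastforce
    qed
    have "B * \<bar>\<tau> x - t0\<bar> < B * (e/(2*B))" using tx B by (intro mult_strict_left_mono) auto
    also have "\<dots> = e/2" using B by simp
    finally have h1b: "\<bar>PK K x (\<tau> x) - PK K x t0\<bar> < e/2" using 1 by linarith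
    have 2: "\<bar>(PK K x t0 - PK K x0 t0) - (PK K x 0 - PK K x0 0)\<bar> \<le> (e/(2*R)) * \<bar>t0 - 0\<bar>"
    proof (rule deriv_bound_seg)
      fix u assume u: "min 0 t0 \<le> u" "u \<le> max 0 t0"
      show "((\<lambda>t. PK K x t - PK K x0 t) has_real_derivative
              apply_bcontfun (K (-u)) x - apply_bcontfun (K (-u)) x0) (at u)"
        by (intro DERIV_diff PK_deriv K)
    next
      fix u assume u: "min 0 t0 \<le> u" "u \<le> max 0 t0"
      have "-u \<in> {-R..R}" using u R by auto
      moreover have "dist (-u, x) (-u, x0) < d2" using x by (simp add: dist_Pair_Pair)
      ultimately have "dist (\<Phi> (-u, x)) (\<Phi> (-u, x0)) < e/(2*R)" by (intro d2(2)) auto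
      then show "\<bar>apply_bcontfun (K (-u)) x - apply_bcontfun (K (-u)) x0\<bar> \<le> e/(2*R)"
        by (simp add: \<Phi>_def dist_real_def)
    qed
    have "(e/(2*R)) * \<bar>t0\<bar> \<le> (e/(2*R)) * R" using R e by (intro mult_left_mono) auto
    also have "\<dots> = e/2" using R by simp
    finally have h2b: "\<bar>PK K x t0 - PK K x0 t0\<bar> \<le> e/2" using 2 by (simp only: PK_zero diff_zero)
    show "dist (PK K x (\<tau> x)) (PK K x0 (\<tau> x0)) < e"
      using h1b h2b unfolding dist_real_def t0_def by linarith
  qed
qed



locale setting =
  fixes f :: "('a::metric_space, real) bcontfun \<Rightarrow> ('a, real) bcontfun"
    and f' :: "('a, real) bcontfun \<Rightarrow> ('a, real) bcontfun \<Rightarrow>\<^sub>L ('a, real) bcontfun"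
    and \<alpha> Lf :: real
  assumes cpt: "compact (UNIV :: 'a set)"
    and alpha: "\<alpha> \<ge> 0"
    and lip: "Lf-lipschitz_on UNIV f"
    and fpos: "\<And>\<phi> x. 0 < apply_bcontfun (f \<phi>) x"
    and fder: "\<And>\<phi>. (f has_derivative blinfun_apply (f' \<phi>)) (at \<phi>)"
    and f'c: "continuous_on UNIV f'"
begin

lemma Lf_nonneg: "Lf \<ge> 0" by (rule lipschitz_on_nonneg[OF lip])

lemma f_lip: "norm (f a - f b) \<le> Lf * norm (a - b)"
  using lipschitz_on_normD[OF lip] by auto

lemma f_cont: "continuous_on S f"
  using lipschitz_on_continuous_on[OF lip] continuous_on_subset by blast

lemma f_eval_lip: "\<bar>apply_bcontfun (f a) x - apply_bcontfun (f b) x\<bar> \<le> Lf * norm (a - b)"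
  using abs_eval_le[of "f a - f b" x] f_lip[of a b] by simp

lemma phibar_min: "phibar \<phi> s = \<phi> (min s 0)"
  by (simp add: phibar_def min_def)

lemma BUC_cont: "\<phi> \<in> BUC \<alpha> \<Longrightarrow> continuous_on UNIV (phibar \<phi>)"
proof -
  assume "\<phi> \<in> BUC \<alpha>"
  then have c: "continuous_on {..0} \<phi>" by (simp add: BUC_def)
  have "continuous_on UNIV (\<lambda>s. \<phi> (min s (0::real)))"
    by (rule continuous_on_compose2[OF c]) (auto intro: continuous_intros)
  then show ?thesis by (simp add: phibar_min[abs_def])
qed

lemma kernel_cont: "\<phi> \<in> BUC \<alpha> \<Longrightarrow> continuous_on UNIV (\<lambda>s. f (phibar \<phi> s))"
  by (rule continuous_on_compose2[OF f_cont BUC_cont]) auto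

lemma wbound:
  assumes b: "bounded ((\<lambda>t. exp (- \<alpha> * \<bar>t\<bar>) *\<^sub>R h t) ` {..0})" and s: "s \<le> 0"
  shows "norm (h s) \<le> exp (\<alpha> * \<bar>s\<bar>) * buc_norm \<alpha> h"
proof -
  obtain B where B: "\<And>t. t \<le> 0 \<Longrightarrow> norm (exp (- \<alpha> * \<bar>t\<bar>) *\<^sub>R h t) \<le> B"
    using b by (auto simp: bounded_iff)
  have bdd: "bdd_above ((\<lambda>t. exp (- \<alpha> * \<bar>t\<bar>) * norm (h t)) ` {..0})"
  proof (rule bdd_aboveI2[where M=B])
    fix t :: real assume "t \<in> {..0}"
    then show "exp (- \<alpha> * \<bar>t\<bar>) * norm (h t) \<le> B" using B[of t] by simp
  qed
  have "exp (- \<alpha> * \<bar>s\<bar>) * norm (h s) \<le> buc_norm \<alpha> h"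
    unfolding buc_norm_def using s by (intro cSUP_upper[OF _ bdd]) auto
  then have "exp (\<alpha> * \<bar>s\<bar>) * (exp (- \<alpha> * \<bar>s\<bar>) * norm (h s)) \<le> exp (\<alpha> * \<bar>s\<bar>) * buc_norm \<alpha> h"
    by (intro mult_left_mono) auto
  moreover have "exp (\<alpha> * \<bar>s\<bar>) * (exp (- \<alpha> * \<bar>s\<bar>) * norm (h s)) = norm (h s)"
    by (simp add: mult.assoc[symmetric] exp_add[symmetric])
  ultimately show ?thesis by linarith
qed

lemma buc_norm_nonneg:
  assumes b: "bounded ((\<lambda>t. exp (- \<alpha> * \<bar>t\<bar>) *\<^sub>R h t) ` {..0})"
  shows "buc_norm \<alpha> h \<ge> 0"
  using wbound[OF b, of 0] norm_ge_zero[of "h 0"] by (simp del: norm_ge_zero)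

lemma wbound_bar:
  assumes b: "bounded ((\<lambda>t. exp (- \<alpha> * \<bar>t\<bar>) *\<^sub>R h t) ` {..0})" and T: "T \<ge> 0" and s: "s \<ge> -T"
  shows "norm (phibar h s) \<le> exp (\<alpha> * T) * buc_norm \<alpha> h"
proof -
  have "norm (phibar h s) \<le> exp (\<alpha> * \<bar>min s 0\<bar>) * buc_norm \<alpha> h"
    unfolding phibar_min by (rule wbound[OF b]) auto
  also have "\<dots> \<le> exp (\<alpha> * T) * buc_norm \<alpha> h"
    using alpha T s buc_norm_nonneg[OF b] mult_left_mono[of "- min s 0" T \<alpha>]
    by (intro mult_right_mono) auto
  finally show ?thesis .
qed

lemma BUC_bounded: "\<phi> \<in> BUC \<alpha> \<Longrightarrow> bounded ((\<lambda>t. exp (- \<alpha> * \<bar>t\<bar>) *\<^sub>R \<phi> t) ` {..0})"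
  by (simp add: BUC_def)

lemma BUC_diff_bounded:
  assumes "\<phi> \<in> BUC \<alpha>" "\<psi> \<in> BUC \<alpha>"
  shows "bounded ((\<lambda>t. exp (- \<alpha> * \<bar>t\<bar>) *\<^sub>R (\<psi> t - \<phi> t)) ` {..0})"
proof -
  have "bounded ((\<lambda>t. exp (- \<alpha> * \<bar>t\<bar>) *\<^sub>R \<psi> t - exp (- \<alpha> * \<bar>t\<bar>) *\<^sub>R \<phi> t) ` {..0})"
    by (intro bounded_minus_comp BUC_bounded assms)
  then show ?thesis by (simp add: scaleR_diff_right)
qed

lemma phibar_diff: "phibar (\<lambda>t. \<psi> t - \<phi> t) s = phibar \<psi> s - phibar \<phi> s"
  by (simp add: phibar_def)

lemma pdist:
  assumes p: "p \<in> Xsp \<alpha>" and q: "q \<in> Xsp \<alpha>" and T: "T \<ge> 0"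
  shows "pnorm \<alpha> (pminus q p) \<ge> 0"
    and "\<And>s. s \<ge> -T \<Longrightarrow> norm (phibar (fst q) s - phibar (fst p) s) \<le> exp (\<alpha> * T) * pnorm \<alpha> (pminus q p)"
    and "\<And>x. \<bar>apply_bcontfun (snd q) x - apply_bcontfun (snd p) x\<bar> \<le> pnorm \<alpha> (pminus q p)"
proof -
  have b: "bounded ((\<lambda>t. exp (- \<alpha> * \<bar>t\<bar>) *\<^sub>R (fst q t - fst p t)) ` {..0})"
    using p q by (intro BUC_diff_bounded) (auto simp: Xsp_def)
  have pn: "pnorm \<alpha> (pminus q p) = buc_norm \<alpha> (\<lambda>t. fst q t - fst p t) + norm (snd q - snd p)"
    by (simp add: pnorm_def pminus_def)
  show "pnorm \<alpha> (pminus q p) \<ge> 0" using buc_norm_nonneg[OF b] pn by simp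
  fix s assume s: "s \<ge> -T"
  have "norm (phibar (fst q) s - phibar (fst p) s) \<le> exp (\<alpha> * T) * buc_norm \<alpha> (\<lambda>t. fst q t - fst p t)"
    using wbound_bar[OF b T s] by (simp add: phibar_diff)
  also have "\<dots> \<le> exp (\<alpha> * T) * pnorm \<alpha> (pminus q p)"
    using pn by (intro mult_left_mono) auto
  finally show "norm (phibar (fst q) s - phibar (fst p) s) \<le> exp (\<alpha> * T) * pnorm \<alpha> (pminus q p)" .
next
  fix x
  have b: "bounded ((\<lambda>t. exp (- \<alpha> * \<bar>t\<bar>) *\<^sub>R (fst q t - fst p t)) ` {..0})"
    using p q by (intro BUC_diff_bounded) (auto simp: Xsp_def)
  have pn: "pnorm \<alpha> (pminus q p) = buc_norm \<alpha> (\<lambda>t. fst q t - fst p t) + norm (snd q - snd p)"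
    by (simp add: pnorm_def pminus_def)
  have "\<bar>apply_bcontfun (snd q) x - apply_bcontfun (snd p) x\<bar> \<le> norm (snd q - snd p)"
    using abs_eval_le[of "snd q - snd p" x] by simp
  then show "\<bar>apply_bcontfun (snd q) x - apply_bcontfun (snd p) x\<bar> \<le> pnorm \<alpha> (pminus q p)"
    using pn buc_norm_nonneg[OF b] by linarith
qed

lemma hdist:
  assumes p: "p \<in> Xsp \<alpha>" and T: "T \<ge> 0"
  shows "pnorm \<alpha> p \<ge> 0"
    and "\<And>s. s \<ge> -T \<Longrightarrow> norm (phibar (fst p) s) \<le> exp (\<alpha> * T) * pnorm \<alpha> p"
    and "\<And>x. \<bar>apply_bcontfun (snd p) x\<bar> \<le> pnorm \<alpha> p"
proof -
  have b: "bounded ((\<lambda>t. exp (- \<alpha> * \<bar>t\<bar>) *\<^sub>R (fst p t)) ` {..0})"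
    using p by (intro BUC_bounded) (auto simp: Xsp_def)
  show "pnorm \<alpha> p \<ge> 0" using buc_norm_nonneg[OF b] by (simp add: pnorm_def)
  fix s assume s: "s \<ge> -T"
  have "norm (phibar (fst p) s) \<le> exp (\<alpha> * T) * buc_norm \<alpha> (fst p)"
    using wbound_bar[OF b T s] by simp
  also have "\<dots> \<le> exp (\<alpha> * T) * pnorm \<alpha> p"
    by (intro mult_left_mono) (auto simp: pnorm_def)
  finally show "norm (phibar (fst p) s) \<le> exp (\<alpha> * T) * pnorm \<alpha> p" .
next
  fix x
  have b: "bounded ((\<lambda>t. exp (- \<alpha> * \<bar>t\<bar>) *\<^sub>R (fst p t)) ` {..0})"
    using p by (intro BUC_bounded) (auto simp: Xsp_def)
  show "\<bar>apply_bcontfun (snd p) x\<bar> \<le> pnorm \<alpha> p"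
    using abs_eval_le[of "snd p" x] buc_norm_nonneg[OF b] by (simp add: pnorm_def)
qed

definition G :: "'a hist \<Rightarrow> 'a \<Rightarrow> real \<Rightarrow> real" where
  "G \<phi> x t = PK (\<lambda>s. f (phibar \<phi> s)) x t"

lemma G_deriv: "\<phi> \<in> BUC \<alpha> \<Longrightarrow> ((\<lambda>t. G \<phi> x t) has_real_derivative apply_bcontfun (f (phibar \<phi> (-t))) x) (at t)"
  unfolding G_def by (rule PK_deriv[OF kernel_cont])

lemma G_zero: "G \<phi> x 0 = 0" by (simp add: G_def PK_zero)

lemma G_mono: assumes "\<phi> \<in> BUC \<alpha>" "u < v" shows "G \<phi> x u < G \<phi> x v"
  using assms by (intro DERIV_pos_imp_increasing[OF assms(2)]) (use G_deriv fpos in blast)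

lemma G_inj: assumes "\<phi> \<in> BUC \<alpha>" "G \<phi> x u = G \<phi> x v" shows "u = v"
  using G_mono[OF assms(1), of u v x] G_mono[OF assms(1), of v u x] assms(2)
  by (cases u v rule: linorder_cases) auto

lemma G_lower:
  assumes \<phi>: "\<phi> \<in> BUC \<alpha>" and low: "\<And>s x. s \<ge> -T \<Longrightarrow> c \<le> apply_bcontfun (f (phibar \<phi> s)) x"
    and a: "a \<le> T" and b: "b \<le> T"
  shows "c * \<bar>b - a\<bar> \<le> \<bar>G \<phi> x b - G \<phi> x a\<bar>"
proof (cases "a \<le> b")
  case True
  have "c * (b - a) \<le> G \<phi> x b - G \<phi> x a"
    by (rule deriv_lower_seg[OF True G_deriv[OF \<phi>]]) (use low b in auto)
  then show ?thesis using True by auto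
next
  case False
  have "c * (a - b) \<le> G \<phi> x a - G \<phi> x b"
    by (rule deriv_lower_seg[of b a, OF _ G_deriv[OF \<phi>]]) (use low a False in auto)
  then show ?thesis using False by auto
qed

lemma G_cont_x: "\<phi> \<in> BUC \<alpha> \<Longrightarrow> continuous_on UNIV \<tau> \<Longrightarrow> continuous_on UNIV (\<lambda>x. G \<phi> x (\<tau> x))"
  unfolding G_def by (rule PK_cont[OF cpt kernel_cont])

lemma solve:
  assumes \<psi>: "\<psi> \<in> BUC \<alpha>" and c: "c > 0" and T0: "T \<ge> 0"
    and low: "\<And>s x. s \<ge> -T \<Longrightarrow> c \<le> apply_bcontfun (f (phibar \<psi> s)) x"
    and up: "\<And>x. apply_bcontfun \<epsilon> x < G \<psi> x T"
  shows "\<And>x. G \<psi> x (apply_bcontfun (tauhat f \<psi> \<epsilon>) x) = apply_bcontfun \<epsilon> x"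
    and "\<And>x. apply_bcontfun (tauhat f \<psi> \<epsilon>) x < T"
    and "\<And>x. apply_bcontfun (tauhat f \<psi> \<epsilon>) x \<ge> - norm \<epsilon> / c - 1"
proof -
  have ex: "\<exists>t. - norm \<epsilon> / c - 1 \<le> t \<and> t < T \<and> G \<psi> x t = apply_bcontfun \<epsilon> x" for x
  proof -
    define a where "a = min 0 (apply_bcontfun \<epsilon> x / c) - 1"
    have a0: "a \<le> 0" by (simp add: a_def)
    have "c * (0 - a) \<le> G \<psi> x 0 - G \<psi> x a"
      by (rule deriv_lower_seg[OF a0 G_deriv[OF \<psi>]]) (use low T0 in \<open>auto intro!: low\<close>)
    then have Ga: "G \<psi> x a \<le> c * a" by (simp add: G_zero algebra_simps)
    have "c * min 0 (apply_bcontfun \<epsilon> x / c) \<le> apply_bcontfun \<epsilon> x"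
      using c by (auto simp: min_def zero_le_divide_iff)
    then have "c * a < apply_bcontfun \<epsilon> x" using c by (simp add: a_def algebra_simps)
    with Ga have Ga': "G \<psi> x a \<le> apply_bcontfun \<epsilon> x" by linarith
    have "a \<le> T"
    proof (rule ccontr)
      assume "\<not> a \<le> T"
      then have "G \<psi> x T < G \<psi> x a" by (intro G_mono[OF \<psi>]) auto
      then show False using Ga' up[of x] by linarith
    qed
    have cont: "continuous_on {a..T} (G \<psi> x)"
      using G_deriv[OF \<psi>] by (intro continuous_at_imp_continuous_on ballI DERIV_isCont) blast
    obtain t where t: "a \<le> t" "t \<le> T" "G \<psi> x t = apply_bcontfun \<epsilon> x"
      using IVT'[of "G \<psi> x" a "apply_bcontfun \<epsilon> x" T, OF Ga' less_imp_le[OF up] \<open>a \<le> T\<close> cont] by blast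
    have "t \<noteq> T" using t(3) up[of x] by auto
    moreover have "- norm \<epsilon> / c - 1 \<le> a"
    proof -
      have "\<bar>apply_bcontfun \<epsilon> x\<bar> \<le> norm \<epsilon>" by (rule abs_eval_le)
      then have "- norm \<epsilon> / c \<le> apply_bcontfun \<epsilon> x / c" using c divide_right_mono[of "- norm \<epsilon>" "apply_bcontfun \<epsilon> x" c] by simp
      moreover have "- norm \<epsilon> / c \<le> 0" using c by simp
      ultimately show ?thesis by (simp add: a_def)
    qed
    ultimately show ?thesis using t by (intro exI[of _ t]) auto
  qed
  define \<tau>0 where "\<tau>0 x = (THE t. G \<psi> x t = apply_bcontfun \<epsilon> x)" for x
  have \<tau>0: "G \<psi> x (\<tau>0 x) = apply_bcontfun \<epsilon> x" "- norm \<epsilon> / c - 1 \<le> \<tau>0 x" "\<tau>0 x < T" for x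
  proof -
    obtain t where t: "- norm \<epsilon> / c - 1 \<le> t" "t < T" "G \<psi> x t = apply_bcontfun \<epsilon> x" using ex by blast
    have "\<tau>0 x = t" unfolding \<tau>0_def
      by (rule the_equality) (use t G_inj[OF \<psi>] in metis)+
    then show "G \<psi> x (\<tau>0 x) = apply_bcontfun \<epsilon> x" "- norm \<epsilon> / c - 1 \<le> \<tau>0 x" "\<tau>0 x < T" using t by auto
  qed
  have cont: "continuous_on UNIV \<tau>0"
    unfolding continuous_on_iff
  proof (intro ballI allI impI)
    fix x0 :: 'a and e :: real assume e: "e > 0"
    have "continuous_on UNIV (\<lambda>x. apply_bcontfun \<epsilon> x - G \<psi> x (\<tau>0 x0))"
      by (intro continuous_intros G_cont_x[OF \<psi>]) auto
    then obtain d where d: "d > 0" "\<And>x. dist x x0 < d \<Longrightarrow>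
        dist (apply_bcontfun \<epsilon> x - G \<psi> x (\<tau>0 x0)) (apply_bcontfun \<epsilon> x0 - G \<psi> x0 (\<tau>0 x0)) < c * e"
      using e c unfolding continuous_on_iff by (metis UNIV_I mult_pos_pos)
    show "\<exists>d>0. \<forall>x'\<in>UNIV. dist x' x0 < d \<longrightarrow> dist (\<tau>0 x') (\<tau>0 x0) < e"
    proof (intro exI[of _ d] conjI ballI impI)
      fix x assume x: "dist x x0 < d"
      have "c * \<bar>\<tau>0 x - \<tau>0 x0\<bar> \<le> \<bar>G \<psi> x (\<tau>0 x) - G \<psi> x (\<tau>0 x0)\<bar>"
        by (rule G_lower[OF \<psi> low]) (use \<tau>0 in \<open>auto intro: less_imp_le\<close>)
      also have "\<dots> < c * e" using d(2)[OF x] \<tau>0(1)[of x] \<tau>0(1)[of x0] by (simp add: dist_real_def)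
      finally have "c * \<bar>\<tau>0 x - \<tau>0 x0\<bar> < c * e" .
      then show "dist (\<tau>0 x) (\<tau>0 x0) < e" using c by (simp add: dist_real_def)
    qed (use d in auto)
  qed
  have bnd: "bounded (range \<tau>0)"
    unfolding bounded_iff
  proof (intro exI[of _ "max \<bar>T\<bar> \<bar>- norm \<epsilon> / c - 1\<bar>"] ballI)
    fix y assume "y \<in> range \<tau>0"
    then obtain x where "y = \<tau>0 x" by auto
    then show "norm y \<le> max \<bar>T\<bar> \<bar>- norm \<epsilon> / c - 1\<bar>" using \<tau>0(2,3)[of x] by auto
  qed
  have mem: "\<tau>0 \<in> bcontfun" using cont bnd by (simp add: bcontfun_def)
  have th: "tauhat f \<psi> \<epsilon> = Bcontfun \<tau>0"
    unfolding tauhat_def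
  proof (rule the_equality)
    show "\<forall>x. interval_lebesgue_integral lborel (ereal (- apply_bcontfun (Bcontfun \<tau>0) x)) (ereal 0)
        (\<lambda>s. apply_bcontfun (f (phibar \<psi> s)) x) = apply_bcontfun \<epsilon> x"
      using \<tau>0(1) by (simp add: Bcontfun_inverse[OF mem] G_def PK_def)
    fix \<tau> assume h: "\<forall>x. interval_lebesgue_integral lborel (ereal (- apply_bcontfun \<tau> x)) (ereal 0)
        (\<lambda>s. apply_bcontfun (f (phibar \<psi> s)) x) = apply_bcontfun \<epsilon> x"
    show "\<tau> = Bcontfun \<tau>0"
    proof (rule bcontfun_eqI)
      fix x
      have "G \<psi> x (apply_bcontfun \<tau> x) = G \<psi> x (\<tau>0 x)" using h \<tau>0(1)[of x] by (simp add: G_def PK_def)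
      then show "apply_bcontfun \<tau> x = apply_bcontfun (Bcontfun \<tau>0) x"
        using G_inj[OF \<psi>] by (simp add: Bcontfun_inverse[OF mem])
    qed
  qed
  fix x
  show "G \<psi> x (apply_bcontfun (tauhat f \<psi> \<epsilon>) x) = apply_bcontfun \<epsilon> x"
    "apply_bcontfun (tauhat f \<psi> \<epsilon>) x < T"
    "apply_bcontfun (tauhat f \<psi> \<epsilon>) x \<ge> - norm \<epsilon> / c - 1"
    using \<tau>0[of x] by (simp_all add: th Bcontfun_inverse[OF mem])
qed

lemma g_meas: "\<phi> \<in> BUC \<alpha> \<Longrightarrow> (\<lambda>s. apply_bcontfun (f (phibar \<phi> s)) x) \<in> borel_measurable lborel"
  using borel_measurable_continuous_onI[OF eval_cont[OF kernel_cont]] by (simp add: measurable_lborel1)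

lemma nnG:
  assumes \<phi>: "\<phi> \<in> BUC \<alpha>" and T: "T \<ge> 0"
  shows "ennreal (G \<phi> x T) = (\<integral>\<^sup>+ s. ennreal (indicator {-T..0} s * apply_bcontfun (f (phibar \<phi> s)) x) \<partial>lborel)"
proof -
  let ?g = "\<lambda>s. apply_bcontfun (f (phibar \<phi> s)) x"
  have gc: "continuous_on UNIV ?g" by (rule eval_cont[OF kernel_cont[OF \<phi>]])
  have "G \<phi> x T = (LBINT s:{-T..0}. ?g s)"
    unfolding G_def PK_def using T by (subst interval_integral_Icc) auto
  also have "\<dots> = integral\<^sup>L lborel (\<lambda>s. indicator {-T..0} s * ?g s)"
    by (simp add: set_lebesgue_integral_def)
  finally have 1: "G \<phi> x T = integral\<^sup>L lborel (\<lambda>s. indicator {-T..0} s * ?g s)" .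
  have int: "integrable lborel (\<lambda>s. indicator {-T..0} s * ?g s)"
    using borel_integrable_atLeastAtMost'[OF continuous_on_subset[OF gc], of "-T" 0]
    by (simp add: set_integrable_def)
  have "(\<integral>\<^sup>+ s. ennreal (indicator {-T..0} s * ?g s) \<partial>lborel) = ennreal (integral\<^sup>L lborel (\<lambda>s. indicator {-T..0} s * ?g s))"
    by (rule nn_integral_eq_integral[OF int]) (auto intro!: AE_I2 less_imp_le[OF fpos] simp: indicator_def)
  then show ?thesis using 1 by simp
qed

lemma nn_lower:
  assumes \<phi>: "\<phi> \<in> BUC \<alpha>" and T: "T \<ge> 0"
  shows "ennreal (G \<phi> x T) \<le> set_nn_integral lborel {..0} (\<lambda>s. ennreal (apply_bcontfun (f (\<phi> s)) x))"
  unfolding nnG[OF \<phi> T]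
  by (intro nn_integral_mono) (auto simp: indicator_def phibar_def)

lemma nn_upper:
  assumes \<phi>: "\<phi> \<in> BUC \<alpha>"
  shows "set_nn_integral lborel {..0} (\<lambda>s. ennreal (apply_bcontfun (f (\<phi> s)) x))
    \<le> (SUP n::nat. ennreal (G \<phi> x (real n)))"
proof -
  let ?g = "\<lambda>s. apply_bcontfun (f (phibar \<phi> s)) x"
  define F where "F n s = ennreal (indicator {- real n..0} s * ?g s)" for n :: nat and s
  have inc: "incseq F"
    unfolding incseq_def le_fun_def F_def
    by (auto simp: indicator_def intro!: ennreal_leI less_imp_le[OF fpos])
  have meas: "F n \<in> borel_measurable lborel" for n
    unfolding F_def using g_meas[OF \<phi>, of x] by measurable
  have "set_nn_integral lborel {..0} (\<lambda>s. ennreal (apply_bcontfun (f (\<phi> s)) x))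
      \<le> (\<integral>\<^sup>+ s. (SUP n. F n s) \<partial>lborel)"
  proof (intro nn_integral_mono)
    fix s :: real
    show "ennreal (apply_bcontfun (f (\<phi> s)) x) * indicator {..0} s \<le> (SUP n. F n s)"
    proof (cases "s \<le> 0")
      case True
      have "ennreal (apply_bcontfun (f (\<phi> s)) x) * indicator {..0} s = F (nat \<lceil>-s\<rceil>) s"
        using True by (simp add: F_def indicator_def phibar_def) linarith
      also have "\<dots> \<le> (SUP n. F n s)" by (rule SUP_upper) auto
      finally show ?thesis .
    qed auto
  qed
  also have "\<dots> = (SUP n. integral\<^sup>N lborel (F n))"
    by (rule nn_integral_monotone_convergence_SUP[OF inc meas])
  also have "\<dots> = (SUP n::nat. ennreal (G \<phi> x (real n)))"
    unfolding F_def using nnG[OF \<phi>] by simp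
  finally show ?thesis .
qed

lemma G_mono_le: assumes "\<phi> \<in> BUC \<alpha>" "u \<le> v" shows "G \<phi> x u \<le> G \<phi> x v"
  using G_mono[OF assms(1), of u v x] assms(2) by (cases "u = v") auto

lemma kernel_min:
  assumes \<phi>: "\<phi> \<in> BUC \<alpha>" and T: "T \<ge> 0"
  shows "\<exists>m>0. \<forall>s x. s \<ge> -T \<longrightarrow> m \<le> apply_bcontfun (f (phibar \<phi> s)) x"
proof -
  let ?h = "\<lambda>p::real\<times>'a. apply_bcontfun (f (phibar \<phi> (fst p))) (snd p)"
  have hc: "continuous_on UNIV ?h" by (rule kernel_joint_cont[OF kernel_cont[OF \<phi>]])
  have C: "compact ({-T..0} \<times> (UNIV::'a set))" by (intro compact_Times cpt) auto
  have ne: "{-T..0} \<times> (UNIV::'a set) \<noteq> {}" using T by auto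
  obtain p0 where p0: "p0 \<in> {-T..0} \<times> UNIV" "\<And>p. p \<in> {-T..0} \<times> UNIV \<Longrightarrow> ?h p0 \<le> ?h p"
    using continuous_attains_inf[OF C ne continuous_on_subset[OF hc]] by blast
  show ?thesis
  proof (intro exI[of _ "?h p0"] conjI allI impI)
    show "?h p0 > 0" by (rule fpos)
    fix s x assume s: "s \<ge> -T"
    show "?h p0 \<le> apply_bcontfun (f (phibar \<phi> s)) x"
    proof (cases "s \<le> 0")
      case True then show ?thesis using p0(2)[of "(s, x)"] s by auto
    next
      case False
      then have "phibar \<phi> s = phibar \<phi> 0" by (simp add: phibar_def)
      then show ?thesis using p0(2)[of "(0, x)"] T by auto
    qed
  qed
qed

lemma point_data:
  assumes pD: "(\<phi>, \<delta>) \<in> Dtau f \<alpha>"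
  shows "\<exists>T m \<eta>. T > 0 \<and> m > 0 \<and> \<eta> > 0 \<and> (\<forall>s x. s \<ge> -T \<longrightarrow> m \<le> apply_bcontfun (f (phibar \<phi> s)) x)
     \<and> (\<forall>x. apply_bcontfun \<delta> x + \<eta> \<le> G \<phi> x T)"
proof -
  have \<phi>: "\<phi> \<in> BUC \<alpha>" using pD by (simp add: Dtau_def)
  have ex: "\<exists>n::nat. apply_bcontfun \<delta> x < G \<phi> x (real n)" for x
  proof (cases "apply_bcontfun \<delta> x > 0")
    case True
    then have "ennreal (apply_bcontfun \<delta> x) < set_nn_integral lborel {..0} (\<lambda>s. ennreal (apply_bcontfun (f (\<phi> s)) x))"
      using pD by (simp add: Dtau_def)
    also have "\<dots> \<le> (SUP n::nat. ennreal (G \<phi> x (real n)))" by (rule nn_upper[OF \<phi>])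
    finally obtain n :: nat where "ennreal (apply_bcontfun \<delta> x) < ennreal (G \<phi> x (real n))"
      by (auto simp: less_SUP_iff)
    then show ?thesis using True by (auto simp: ennreal_less_iff)
  next
    case False
    have "G \<phi> x 0 < G \<phi> x (real 1)" by (rule G_mono[OF \<phi>]) auto
    then show ?thesis using False G_zero[of \<phi> x] by (intro exI[of _ 1]) auto
  qed
  have opn: "open {x. apply_bcontfun \<delta> x < G \<phi> x (real n)}" for n :: nat
  proof -
    have "continuous_on UNIV (\<lambda>x. G \<phi> x (real n))" by (rule G_cont_x[OF \<phi>]) auto
    then show ?thesis by (intro open_Collect_less) (auto simp: continuous_on_eq_continuous_at)
  qed
  have cov: "(UNIV::'a set) \<subseteq> (\<Union>n\<in>(UNIV::nat set). {x. apply_bcontfun \<delta> x < G \<phi> x (real n)})"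
    using ex by auto
  obtain C where C: "C \<subseteq> (UNIV::nat set)" "finite C" "UNIV \<subseteq> (\<Union>n\<in>C. {x. apply_bcontfun \<delta> x < G \<phi> x (real n)})"
    by (rule compactE_image[OF cpt opn cov])
  define T where "T = real (Max (insert 0 C)) + 1"
  have T: "T > 0" by (simp add: T_def)
  have lt: "apply_bcontfun \<delta> x < G \<phi> x T" for x
  proof -
    obtain n where n: "n \<in> C" "apply_bcontfun \<delta> x < G \<phi> x (real n)" using C(3) by blast
    have "n \<le> Max (insert 0 C)" using n C(2) by (intro Max_ge) auto
    then have "real n \<le> T" by (simp add: T_def)
    then show ?thesis using n(2) G_mono_le[OF \<phi>, of "real n" T x] by linarith
  qed
  let ?d = "\<lambda>x. G \<phi> x T - apply_bcontfun \<delta> x"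
  have dc: "continuous_on UNIV ?d" by (intro continuous_intros G_cont_x[OF \<phi>]) auto
  obtain x0 where x0: "\<And>y. ?d x0 \<le> ?d y"
    using continuous_attains_inf[OF cpt _ dc] by blast
  obtain m where m: "m > 0" "\<forall>s x. s \<ge> -T \<longrightarrow> m \<le> apply_bcontfun (f (phibar \<phi> s)) x"
    using kernel_min[OF \<phi>, of T] T by auto
  show ?thesis
  proof (intro exI conjI)
    show "T > 0" by (rule T)
    show "m > 0" by (rule m)
    show "?d x0 > 0" using lt[of x0] by simp
    show "\<forall>s x. s \<ge> -T \<longrightarrow> m \<le> apply_bcontfun (f (phibar \<phi> s)) x" by (rule m(2))
    show "\<forall>x. apply_bcontfun \<delta> x + ?d x0 \<le> G \<phi> x T" using x0 by (auto simp: algebra_simps)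
  qed
qed

lemma unif_diff:
  assumes C: "compact C" and e: "e > 0"
  shows "\<exists>\<rho>>0. \<forall>z\<in>C. \<forall>y. norm (y - z) < \<rho> \<longrightarrow>
     norm (f' y - f' z) < e \<and> norm (f y - f z - blinfun_apply (f' z) (y - z)) \<le> e * norm (y - z)"
proof -
  obtain \<rho> where \<rho>: "\<rho> > 0" "\<And>z y. z \<in> C \<Longrightarrow> dist y z < \<rho> \<Longrightarrow> dist (f' y) (f' z) < e"
    using unif_cont_near_compact[OF f'c C e] by blast
  have "\<forall>z\<in>C. \<forall>y. norm (y - z) < \<rho> \<longrightarrow>
     norm (f' y - f' z) < e \<and> norm (f y - f z - blinfun_apply (f' z) (y - z)) \<le> e * norm (y - z)"
  proof (intro ballI allI impI conjI)
    fix z y assume z: "z \<in> C" and y: "norm (y - z) < \<rho>"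
    show "norm (f' y - f' z) < e" using \<rho>(2)[OF z, of y] y by (simp add: dist_norm)
    let ?F = "\<lambda>w. f w - blinfun_apply (f' z) w"
    have der: "(?F has_derivative (\<lambda>v. blinfun_apply (f' w) v - blinfun_apply (f' z) v)) (at w within ball z \<rho>)" for w
      by (rule has_derivative_diff[OF has_derivative_at_withinI[OF fder]
          bounded_linear_imp_has_derivative[OF bounded_linear_blinfun_apply[OF bounded_linear_ident]]])
    have on: "onorm (\<lambda>v. blinfun_apply (f' w) v - blinfun_apply (f' z) v) \<le> e" if "w \<in> ball z \<rho>" for w
    proof -
      have "dist (f' w) (f' z) < e" using \<rho>(2)[OF z, of w] that by (simp add: dist_commute)
      then have "norm (f' w - f' z) \<le> e" by (simp add: dist_norm)
      moreover have "blinfun_apply (f' w - f' z) = (\<lambda>v. blinfun_apply (f' w) v - blinfun_apply (f' z) v)"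
        by (simp add: blinfun.diff_left fun_eq_iff)
      ultimately show ?thesis by (simp add: norm_blinfun.rep_eq)
    qed
    have "norm (?F y - ?F z) \<le> e * norm (y - z)"
      by (rule differentiable_bound[OF convex_ball der on]) (use y \<rho> in \<open>auto simp: dist_norm norm_minus_commute\<close>)
    moreover have "?F y - ?F z = f y - f z - blinfun_apply (f' z) (y - z)"
      by (simp add: blinfun.diff_right)
    ultimately show "norm (f y - f z - blinfun_apply (f' z) (y - z)) \<le> e * norm (y - z)" by simp
  qed
  then show ?thesis using \<rho> by blast
qed

end

lemma PK_lin:
  assumes K1: "continuous_on UNIV K1" and K2: "continuous_on UNIV K2"
  shows "PK (\<lambda>s. a *\<^sub>R K1 s + b *\<^sub>R K2 s) x t = a * PK K1 x t + b * PK K2 x t"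
proof -
  have K3: "continuous_on UNIV (\<lambda>s. a *\<^sub>R K1 s + b *\<^sub>R K2 s)" by (intro continuous_intros K1 K2)
  have "\<bar>(PK (\<lambda>s. a *\<^sub>R K1 s + b *\<^sub>R K2 s) x t - (a * PK K1 x t + b * PK K2 x t))
      - (PK (\<lambda>s. a *\<^sub>R K1 s + b *\<^sub>R K2 s) x 0 - (a * PK K1 x 0 + b * PK K2 x 0))\<bar> \<le> 0 * \<bar>t - 0\<bar>"
  proof (rule deriv_bound_seg)
    fix u
    show "((\<lambda>t. PK (\<lambda>s. a *\<^sub>R K1 s + b *\<^sub>R K2 s) x t - (a * PK K1 x t + b * PK K2 x t)) has_real_derivative
      apply_bcontfun (a *\<^sub>R K1 (-u) + b *\<^sub>R K2 (-u)) x - (a * apply_bcontfun (K1 (-u)) x + b * apply_bcontfun (K2 (-u)) x)) (at u)"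
      by (intro DERIV_diff DERIV_add DERIV_cmult PK_deriv K1 K2 K3)
  next
    fix u
    show "\<bar>apply_bcontfun (a *\<^sub>R K1 (-u) + b *\<^sub>R K2 (-u)) x - (a * apply_bcontfun (K1 (-u)) x + b * apply_bcontfun (K2 (-u)) x)\<bar> \<le> 0"
      by simp
  qed
  then show ?thesis by (simp add: PK_zero)
qed

context setting begin

definition Lam :: "'a hist \<Rightarrow> 'a hist \<Rightarrow> 'a \<Rightarrow> real \<Rightarrow> real" where
  "Lam \<phi> h x t = PK (\<lambda>s. blinfun_apply (f' (phibar \<phi> s)) (phibar h s)) x t"

lemma f'bar_cont: "\<phi> \<in> BUC \<alpha> \<Longrightarrow> continuous_on UNIV (\<lambda>s. f' (phibar \<phi> s))"
  by (rule continuous_on_compose2[OF f'c BUC_cont]) auto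

lemma lam_kernel_cont:
  assumes "\<phi> \<in> BUC \<alpha>" "continuous_on UNIV (phibar h)"
  shows "continuous_on UNIV (\<lambda>s. blinfun_apply (f' (phibar \<phi> s)) (phibar h s))"
  by (intro continuous_intros f'bar_cont assms)

lemma Lam_deriv: "\<phi> \<in> BUC \<alpha> \<Longrightarrow> continuous_on UNIV (phibar h) \<Longrightarrow>
   ((\<lambda>t. Lam \<phi> h x t) has_real_derivative apply_bcontfun (blinfun_apply (f' (phibar \<phi> (-t))) (phibar h (-t))) x) (at t)"
  unfolding Lam_def by (rule PK_deriv[OF lam_kernel_cont])

definition Ld :: "'a hist \<times> ('a, real) bcontfun \<Rightarrow> 'a hist \<times> ('a, real) bcontfun \<Rightarrow> ('a, real) bcontfun" where
  "Ld p h = Bcontfun (\<lambda>x. (apply_bcontfun (snd h) x - Lam (fst p) (fst h) x (apply_bcontfun (tauhat f (fst p) (snd p)) x))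
      / apply_bcontfun (f (phibar (fst p) (- apply_bcontfun (tauhat f (fst p) (snd p)) x))) x)"

lemma cont_bcontfun: "continuous_on UNIV g \<Longrightarrow> (g :: 'a \<Rightarrow> real) \<in> bcontfun"
  unfolding bcontfun_def using compact_imp_bounded[OF compact_continuous_image[OF _ cpt]] by auto

lemma Ld_eval:
  assumes \<phi>: "\<phi> \<in> BUC \<alpha>" and h: "continuous_on UNIV (phibar (fst h))"
  shows "apply_bcontfun (Ld (\<phi>, \<delta>) h) x = (apply_bcontfun (snd h) x - Lam \<phi> (fst h) x (apply_bcontfun (tauhat f \<phi> \<delta>) x))
      / apply_bcontfun (f (phibar \<phi> (- apply_bcontfun (tauhat f \<phi> \<delta>) x))) x"
proof -
  have c1: "continuous_on UNIV (\<lambda>x. Lam \<phi> (fst h) x (apply_bcontfun (tauhat f \<phi> \<delta>) x))"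
    unfolding Lam_def by (rule PK_cont[OF cpt lam_kernel_cont[OF \<phi> h]]) simp
  have um: "continuous_on UNIV (uminus::real \<Rightarrow> real)"
    using continuous_on_minus[OF continuous_on_id[of UNIV]] by (simp add: id_def)
  have c2: "continuous_on UNIV (\<lambda>x. apply_bcontfun (f (phibar \<phi> (- apply_bcontfun (tauhat f \<phi> \<delta>) x))) x)"
    using kernel_comp_cont[OF continuous_on_compose2[OF kernel_cont[OF \<phi>], of UNIV uminus],
        of "apply_bcontfun (tauhat f \<phi> \<delta>)"]
    using um by auto
  have "continuous_on UNIV (\<lambda>x. (apply_bcontfun (snd h) x - Lam \<phi> (fst h) x (apply_bcontfun (tauhat f \<phi> \<delta>) x))
      / apply_bcontfun (f (phibar \<phi> (- apply_bcontfun (tauhat f \<phi> \<delta>) x))) x)"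
    by (intro continuous_intros c1 c2) (auto intro: continuous_on_apply_bcontfun simp: fpos[THEN less_imp_neq, THEN not_sym])
  then show ?thesis unfolding Ld_def by (simp add: Bcontfun_inverse[OF cont_bcontfun])
qed

end



locale atp = setting +
  fixes \<phi> :: "'a hist" and \<delta> :: "('a, real) bcontfun" and T m \<eta> :: real
  assumes pD: "(\<phi>, \<delta>) \<in> Dtau f \<alpha>" and T: "T > 0" and m: "m > 0" and \<eta>: "\<eta> > 0"
    and low: "\<And>s x. s \<ge> -T \<Longrightarrow> m \<le> apply_bcontfun (f (phibar \<phi> s)) x"
    and up: "\<And>x. apply_bcontfun \<delta> x + \<eta> \<le> G \<phi> x T"
begin

lemma phiB: "\<phi> \<in> BUC \<alpha>" using pD by (simp add: Dtau_def)
lemma pX: "(\<phi>, \<delta>) \<in> Xsp \<alpha>" using phiB by (simp add: Xsp_def)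

definition E where "E = exp (\<alpha> * T)"
lemma E1: "E \<ge> 1" unfolding E_def using alpha T by simp
lemma E0: "E > 0" using E1 by simp

abbreviation tau where "tau \<equiv> apply_bcontfun (tauhat f \<phi> \<delta>)"

lemma up': "apply_bcontfun \<delta> x < G \<phi> x T" using up[of x] \<eta> by linarith

lemma tau: "G \<phi> x (tau x) = apply_bcontfun \<delta> x" "tau x < T" "tau x \<ge> - norm \<delta> / m - 1"
  using solve[OF phiB m less_imp_le[OF T] low up'] by auto

definition A0 where "A0 = T + norm \<delta> / m + 1"
lemma A0: "A0 > 0" using T m by (simp add: A0_def add_pos_nonneg)
lemma tau_abs: "\<bar>tau x\<bar> \<le> A0"
proof -
  have "norm \<delta> / m \<ge> 0" using m by simp
  then show ?thesis using tau(2,3)[of x] T by (auto simp: A0_def abs_if)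
qed

lemma F1_ex: "\<exists>F1>0. \<forall>s. s \<ge> -T \<longrightarrow> norm (f' (phibar \<phi> s)) \<le> F1"
proof -
  have "compact ((\<lambda>s. f' (phibar \<phi> s)) ` {-T..0})"
    by (rule compact_continuous_image[OF continuous_on_subset[OF f'bar_cont[OF phiB]]]) auto
  then obtain B where B: "B > 0" "\<forall>y\<in>(\<lambda>s. f' (phibar \<phi> s)) ` {-T..0}. norm y \<le> B"
    using compact_imp_bounded bounded_pos by metis
  show ?thesis
  proof (intro exI[of _ B] conjI allI impI)
    fix s assume s: "s \<ge> -T"
    show "norm (f' (phibar \<phi> s)) \<le> B"
    proof (cases "s \<le> 0")
      case True then show ?thesis using B s by auto
    next
      case False
      then have "phibar \<phi> s = phibar \<phi> 0" by (simp add: phibar_def)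
      then show ?thesis using B T by auto
    qed
  qed (rule B(1))
qed

definition rr where "rr q = pnorm \<alpha> (pminus q (\<phi>, \<delta>))"

lemma rr_nonneg: "q \<in> Xsp \<alpha> \<Longrightarrow> rr q \<ge> 0"
  unfolding rr_def by (rule pdist(1)[OF pX _ order_refl])

lemma qB: "q \<in> Xsp \<alpha> \<Longrightarrow> fst q \<in> BUC \<alpha>" by (auto simp: Xsp_def)

lemma bar_diff: "q \<in> Xsp \<alpha> \<Longrightarrow> s \<ge> -T \<Longrightarrow> norm (phibar (fst q) s - phibar \<phi> s) \<le> E * rr q"
  using pdist(2)[OF pX _ less_imp_le[OF T], of q s] by (simp add: E_def rr_def)

lemma eps_diff: "q \<in> Xsp \<alpha> \<Longrightarrow> \<bar>apply_bcontfun (snd q) x - apply_bcontfun \<delta> x\<bar> \<le> rr q"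
  using pdist(3)[OF pX _ less_imp_le[OF T], of q x] by (simp add: rr_def)

lemma kdiff: "q \<in> Xsp \<alpha> \<Longrightarrow> s \<ge> -T \<Longrightarrow>
   \<bar>apply_bcontfun (f (phibar (fst q) s)) x - apply_bcontfun (f (phibar \<phi> s)) x\<bar> \<le> Lf * E * rr q"
  using f_eval_lip[where a="phibar (fst q) s" and b="phibar \<phi> s" and x=x] bar_diff[of q s] Lf_nonneg
    mult_left_mono[of "norm (phibar (fst q) s - phibar \<phi> s)" "E * rr q" Lf]
  by (simp add: mult.assoc)

lemma Gdiff:
  assumes q: "q \<in> Xsp \<alpha>" and t: "t \<le> T"
  shows "\<bar>G (fst q) x t - G \<phi> x t\<bar> \<le> Lf * E * rr q * \<bar>t\<bar>"
proof -
  have "\<bar>(G (fst q) x t - G \<phi> x t) - (G (fst q) x 0 - G \<phi> x 0)\<bar> \<le> (Lf * E * rr q) * \<bar>t - 0\<bar>"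
  proof (rule deriv_bound_seg)
    fix u
    show "((\<lambda>t. G (fst q) x t - G \<phi> x t) has_real_derivative
        apply_bcontfun (f (phibar (fst q) (-u))) x - apply_bcontfun (f (phibar \<phi> (-u))) x) (at u)"
      by (intro DERIV_diff G_deriv qB[OF q] phiB)
  next
    fix u assume "min 0 t \<le> u" "u \<le> max 0 t"
    then have "-u \<ge> -T" using t T by auto
    then show "\<bar>apply_bcontfun (f (phibar (fst q) (-u))) x - apply_bcontfun (f (phibar \<phi> (-u))) x\<bar> \<le> Lf * E * rr q"
      by (rule kdiff[OF q])
  qed
  then show ?thesis by (simp add: G_zero)
qed

lemma near:
  assumes q: "q \<in> Xsp \<alpha>" and r1: "rr q * (1 + T * Lf * E) < \<eta>" and r2: "Lf * E * rr q \<le> m / 2"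
  shows "q \<in> Dtau f \<alpha>" "\<And>s x. s \<ge> -T \<Longrightarrow> m / 2 \<le> apply_bcontfun (f (phibar (fst q) s)) x"
    "\<And>x. apply_bcontfun (snd q) x < G (fst q) x T"
proof -
  show lowq: "m / 2 \<le> apply_bcontfun (f (phibar (fst q) s)) x" if "s \<ge> -T" for s x
    using kdiff[OF q that, of x] low[OF that, of x] r2 by linarith
  show upq: "apply_bcontfun (snd q) x < G (fst q) x T" for x
  proof -
    have 1: "apply_bcontfun (snd q) x \<le> apply_bcontfun \<delta> x + rr q" using eps_diff[OF q, of x] by linarith
    have 2: "G \<phi> x T - Lf * E * rr q * T \<le> G (fst q) x T" using Gdiff[OF q order_refl, of x] T by linarith
    have 3: "rr q * (1 + T * Lf * E) = rr q + Lf * E * rr q * T" by (simp add: algebra_simps)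
    show ?thesis using 1 2 3 up[of x] r1 by linarith
  qed
  show "q \<in> Dtau f \<alpha>"
  proof -
    have "ennreal (apply_bcontfun (snd q) x) < set_nn_integral lborel {..0} (\<lambda>s. ennreal (apply_bcontfun (f (fst q s)) x))"
      if "0 < apply_bcontfun (snd q) x" for x
    proof -
      have "ennreal (apply_bcontfun (snd q) x) < ennreal (G (fst q) x T)"
        using upq[of x] that by (simp add: ennreal_less_iff)
      also have "\<dots> \<le> set_nn_integral lborel {..0} (\<lambda>s. ennreal (apply_bcontfun (f (fst q s)) x))"
        by (rule nn_lower[OF qB[OF q]]) (use T in simp)
      finally show ?thesis .
    qed
    then show ?thesis using qB[OF q] by (cases q) (auto simp: Dtau_def)
  qed
qed

definition C1 where "C1 = 2 * (1 + A0 * Lf * E) / m"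

lemma C1: "C1 > 0" unfolding C1_def using A0 E0 Lf_nonneg m by (simp add: add_pos_nonneg)

lemma sig:
  assumes q: "q \<in> Xsp \<alpha>" and r1: "rr q * (1 + T * Lf * E) < \<eta>" and r2: "Lf * E * rr q \<le> m / 2"
  shows "G (fst q) x (apply_bcontfun (tauhat f (fst q) (snd q)) x) = apply_bcontfun (snd q) x"
    "apply_bcontfun (tauhat f (fst q) (snd q)) x < T"
    "\<bar>apply_bcontfun (tauhat f (fst q) (snd q)) x - tau x\<bar> \<le> C1 * rr q"
proof -
  have m2: "m / 2 > 0" using m by simp
  note S = solve[OF qB[OF q] m2 less_imp_le[OF T] near(2)[OF q r1 r2] near(3)[OF q r1 r2]]
  show eq: "G (fst q) x (apply_bcontfun (tauhat f (fst q) (snd q)) x) = apply_bcontfun (snd q) x"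
    and lt: "apply_bcontfun (tauhat f (fst q) (snd q)) x < T" using S by auto
  let ?s = "apply_bcontfun (tauhat f (fst q) (snd q)) x"
  have "m / 2 * \<bar>tau x - ?s\<bar> \<le> \<bar>G (fst q) x (tau x) - G (fst q) x ?s\<bar>"
    by (rule G_lower[OF qB[OF q] near(2)[OF q r1 r2]]) (use lt tau(2)[of x] in auto)
  also have "\<dots> = \<bar>G (fst q) x (tau x) - apply_bcontfun (snd q) x\<bar>" using eq by simp
  also have "\<dots> \<le> \<bar>G (fst q) x (tau x) - G \<phi> x (tau x)\<bar> + \<bar>apply_bcontfun (snd q) x - apply_bcontfun \<delta> x\<bar>"
    using tau(1)[of x] by linarith
  also have "\<dots> \<le> Lf * E * rr q * \<bar>tau x\<bar> + rr q"
    using Gdiff[OF q less_imp_le[OF tau(2)[of x]], of x] eps_diff[OF q, of x] by linarith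
  also have "\<dots> \<le> Lf * E * rr q * A0 + rr q"
    using tau_abs[of x] Lf_nonneg E0 rr_nonneg[OF q] by (simp add: mult_left_mono)
  finally have "m / 2 * \<bar>tau x - ?s\<bar> \<le> rr q * (1 + A0 * Lf * E)" by (simp add: algebra_simps)
  then have "\<bar>tau x - ?s\<bar> \<le> 2 * (rr q * (1 + A0 * Lf * E)) / m" using m by (simp add: field_simps)
  then show "\<bar>?s - tau x\<bar> \<le> C1 * rr q" by (simp add: C1_def abs_minus_commute algebra_simps)
qed

definition F1 where "F1 = (SOME F. F > 0 \<and> (\<forall>s. s \<ge> -T \<longrightarrow> norm (f' (phibar \<phi> s)) \<le> F))"
lemma F1: "F1 > 0" "\<And>s. s \<ge> -T \<Longrightarrow> norm (f' (phibar \<phi> s)) \<le> F1"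
  using someI_ex[OF F1_ex] unfolding F1_def[symmetric] by auto

lemma Xcont: "h \<in> Xsp \<alpha> \<Longrightarrow> continuous_on UNIV (phibar (fst h))"
  by (rule BUC_cont) (auto simp: Xsp_def)

lemma lam_kernel_bound:
  assumes h: "h \<in> Xsp \<alpha>" and s: "s \<ge> -T"
  shows "\<bar>apply_bcontfun (blinfun_apply (f' (phibar \<phi> s)) (phibar (fst h) s)) x\<bar> \<le> F1 * E * pnorm \<alpha> h"
proof -
  have "\<bar>apply_bcontfun (blinfun_apply (f' (phibar \<phi> s)) (phibar (fst h) s)) x\<bar>
      \<le> norm (blinfun_apply (f' (phibar \<phi> s)) (phibar (fst h) s))" by (rule abs_eval_le)
  also have "\<dots> \<le> norm (f' (phibar \<phi> s)) * norm (phibar (fst h) s)" by (rule norm_blinfun)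
  also have "\<dots> \<le> F1 * (E * pnorm \<alpha> h)"
    using F1(1) F1(2)[OF s] hdist(2)[OF h less_imp_le[OF T] s] by (intro mult_mono) (auto simp: E_def)
  finally show ?thesis by (simp add: mult.assoc)
qed

lemma Lam_bound:
  assumes h: "h \<in> Xsp \<alpha>" and t: "t \<le> T"
  shows "\<bar>Lam \<phi> (fst h) x t\<bar> \<le> F1 * E * pnorm \<alpha> h * \<bar>t\<bar>"
proof -
  have "\<bar>Lam \<phi> (fst h) x t - Lam \<phi> (fst h) x 0\<bar> \<le> (F1 * E * pnorm \<alpha> h) * \<bar>t - 0\<bar>"
    unfolding Lam_def
  proof (rule PK_lip[OF lam_kernel_cont[OF phiB Xcont[OF h]]])
    fix u assume "min 0 t \<le> u" "u \<le> max 0 t"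
    then have "-u \<ge> -T" using t T by auto
    then show "\<bar>apply_bcontfun (blinfun_apply (f' (phibar \<phi> (- u))) (phibar (fst h) (- u))) x\<bar> \<le> F1 * E * pnorm \<alpha> h"
      by (rule lam_kernel_bound[OF h])
  qed
  then show ?thesis by (simp add: Lam_def PK_zero)
qed

lemma den_low: "apply_bcontfun (f (phibar \<phi> (- tau x))) x \<ge> m"
  using low[of "- tau x" x] tau(2)[of x] by auto

lemma Ld_ev: "h \<in> Xsp \<alpha> \<Longrightarrow> apply_bcontfun (Ld (\<phi>, \<delta>) h) x = (apply_bcontfun (snd h) x - Lam \<phi> (fst h) x (tau x))
      / apply_bcontfun (f (phibar \<phi> (- tau x))) x"
  by (rule Ld_eval[OF phiB Xcont])

lemma phibar_add: "phibar (\<lambda>t. a t + b t) s = phibar a s + phibar b s"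
  by (simp add: phibar_def)
lemma phibar_scale: "phibar (\<lambda>t. c *\<^sub>R a t) s = c *\<^sub>R phibar a s"
  by (simp add: phibar_def)

lemma Ld_add:
  assumes a: "a \<in> Xsp \<alpha>" and b: "b \<in> Xsp \<alpha>"
  shows "Ld (\<phi>, \<delta>) (padd a b) = Ld (\<phi>, \<delta>) a + Ld (\<phi>, \<delta>) b"
proof (rule bcontfun_eqI)
  fix x
  have ca: "continuous_on UNIV (phibar (fst a))" and cb: "continuous_on UNIV (phibar (fst b))"
    using Xcont[OF a] Xcont[OF b] by auto
  have cab: "continuous_on UNIV (phibar (fst (padd a b)))"
    using continuous_on_add[OF ca cb] by (simp add: padd_def phibar_add[abs_def])
  have lam: "Lam \<phi> (fst (padd a b)) x t = Lam \<phi> (fst a) x t + Lam \<phi> (fst b) x t" for t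
  proof -
    have "Lam \<phi> (fst (padd a b)) x t = PK (\<lambda>s. 1 *\<^sub>R blinfun_apply (f' (phibar \<phi> s)) (phibar (fst a) s)
        + 1 *\<^sub>R blinfun_apply (f' (phibar \<phi> s)) (phibar (fst b) s)) x t"
      by (simp add: Lam_def padd_def phibar_add blinfun.add_right)
    also have "\<dots> = Lam \<phi> (fst a) x t + Lam \<phi> (fst b) x t"
      unfolding Lam_def by (subst PK_lin[OF lam_kernel_cont[OF phiB ca] lam_kernel_cont[OF phiB cb]]) simp
    finally show ?thesis .
  qed
  show "apply_bcontfun (Ld (\<phi>, \<delta>) (padd a b)) x = apply_bcontfun (Ld (\<phi>, \<delta>) a + Ld (\<phi>, \<delta>) b) x"
    using Ld_eval[OF phiB cab, of \<delta> x] Ld_ev[OF a, of x] Ld_ev[OF b, of x] lam[of "tau x"]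
    by (simp add: padd_def add_divide_distrib[symmetric])
qed

lemma Ld_scale:
  assumes a: "a \<in> Xsp \<alpha>"
  shows "Ld (\<phi>, \<delta>) (pscale c a) = c *\<^sub>R Ld (\<phi>, \<delta>) a"
proof (rule bcontfun_eqI)
  fix x
  have ca: "continuous_on UNIV (phibar (fst a))" using Xcont[OF a] by auto
  have cab: "continuous_on UNIV (phibar (fst (pscale c a)))"
    using continuous_on_scaleR[OF continuous_on_const ca, of c] by (simp add: pscale_def phibar_scale[abs_def])
  have lam: "Lam \<phi> (fst (pscale c a)) x t = c * Lam \<phi> (fst a) x t" for t
  proof -
    have "Lam \<phi> (fst (pscale c a)) x t = PK (\<lambda>s. c *\<^sub>R blinfun_apply (f' (phibar \<phi> s)) (phibar (fst a) s)
        + 0 *\<^sub>R blinfun_apply (f' (phibar \<phi> s)) (phibar (fst a) s)) x t"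
      by (simp add: Lam_def pscale_def phibar_scale blinfun.scaleR_right)
    also have "\<dots> = c * Lam \<phi> (fst a) x t"
      unfolding Lam_def by (subst PK_lin[OF lam_kernel_cont[OF phiB ca] lam_kernel_cont[OF phiB ca]]) simp
    finally show ?thesis .
  qed
  show "apply_bcontfun (Ld (\<phi>, \<delta>) (pscale c a)) x = apply_bcontfun (c *\<^sub>R Ld (\<phi>, \<delta>) a) x"
    using Ld_eval[OF phiB cab, of \<delta> x] Ld_ev[OF a, of x] lam[of "tau x"]
    by (simp add: pscale_def right_diff_distrib[symmetric] times_divide_eq_right)
qed

definition LB where "LB = (1 + F1 * E * A0) / m"

lemma Ld_bound:
  assumes h: "h \<in> Xsp \<alpha>"
  shows "norm (Ld (\<phi>, \<delta>) h) \<le> LB * pnorm \<alpha> h"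
proof (rule norm_bound)
  fix x
  have P: "pnorm \<alpha> h \<ge> 0" by (rule hdist(1)[OF h order_refl])
  have num: "\<bar>apply_bcontfun (snd h) x - Lam \<phi> (fst h) x (tau x)\<bar> \<le> (1 + F1 * E * A0) * pnorm \<alpha> h"
  proof -
    have "\<bar>Lam \<phi> (fst h) x (tau x)\<bar> \<le> F1 * E * pnorm \<alpha> h * \<bar>tau x\<bar>"
      by (rule Lam_bound[OF h less_imp_le[OF tau(2)]])
    also have "\<dots> \<le> F1 * E * pnorm \<alpha> h * A0"
      using F1(1) E0 P tau_abs[of x] by (intro mult_left_mono) auto
    finally show ?thesis using hdist(3)[OF h order_refl, of x] by (simp add: algebra_simps)
  qed
  have "\<bar>(apply_bcontfun (snd h) x - Lam \<phi> (fst h) x (tau x)) / apply_bcontfun (f (phibar \<phi> (- tau x))) x\<bar>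
      \<le> (1 + F1 * E * A0) * pnorm \<alpha> h / m"
  proof -
    let ?n = "apply_bcontfun (snd h) x - Lam \<phi> (fst h) x (tau x)"
    let ?d = "apply_bcontfun (f (phibar \<phi> (- tau x))) x"
    let ?N = "(1 + F1 * E * A0) * pnorm \<alpha> h"
    have d: "?d \<ge> m" by (rule den_low)
    have d0: "?d > 0" using d m by linarith
    have N0: "?N \<ge> 0" using num by linarith
    have "\<bar>?n / ?d\<bar> = \<bar>?n\<bar> / ?d" using d0 by simp
    also have "\<dots> \<le> ?N / ?d" using num d0 by (intro divide_right_mono) auto
    also have "\<dots> \<le> ?N / m" using N0 d m by (intro divide_left_mono) auto
    finally show ?thesis .
  qed
  then show "norm (apply_bcontfun (Ld (\<phi>, \<delta>) h) x) \<le> LB * pnorm \<alpha> h"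
    by (simp add: Ld_ev[OF h] LB_def)
qed

lemma Ld_blX: "bounded_linear_X \<alpha> (Ld (\<phi>, \<delta>))"
  unfolding bounded_linear_X_def
proof (intro conjI)
  show "\<forall>p\<in>Xsp \<alpha>. \<forall>q\<in>Xsp \<alpha>. Ld (\<phi>, \<delta>) (padd p q) = Ld (\<phi>, \<delta>) p + Ld (\<phi>, \<delta>) q"
    using Ld_add by blast
  show "\<forall>c. \<forall>p\<in>Xsp \<alpha>. Ld (\<phi>, \<delta>) (pscale c p) = c *\<^sub>R Ld (\<phi>, \<delta>) p"
    using Ld_scale by blast
  show "\<exists>K. \<forall>p\<in>Xsp \<alpha>. norm (Ld (\<phi>, \<delta>) p) \<le> K * pnorm \<alpha> p"
    using Ld_bound by blast
qed

lemma div_bound: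
  assumes "\<bar>n\<bar> \<le> N" "d \<ge> m"
  shows "\<bar>n / d\<bar> \<le> N / m"
proof -
  have d0: "d > 0" using assms m by linarith
  have N0: "N \<ge> 0" using assms(1) by linarith
  have "\<bar>n / d\<bar> = \<bar>n\<bar> / d" using d0 by simp
  also have "\<dots> \<le> N / d" using assms d0 by (intro divide_right_mono) auto
  also have "\<dots> \<le> N / m" using N0 assms m by (intro divide_left_mono) auto
  finally show ?thesis .
qed

lemma frechet_pt:
  assumes q: "q \<in> Xsp \<alpha>" and r1: "rr q * (1 + T * Lf * E) < \<eta>" and r2: "Lf * E * rr q \<le> m / 2"
    and ud: "\<And>s. s \<ge> -T \<Longrightarrow> norm (f (phibar (fst q) s) - f (phibar \<phi> s)
        - blinfun_apply (f' (phibar \<phi> s)) (phibar (fst q) s - phibar \<phi> s)) \<le> e1 * norm (phibar (fst q) s - phibar \<phi> s)"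
    and uc: "\<And>u. \<bar>u - tau x\<bar> \<le> C1 * rr q \<Longrightarrow>
        \<bar>apply_bcontfun (f (phibar \<phi> (-u))) x - apply_bcontfun (f (phibar \<phi> (- tau x))) x\<bar> \<le> e2"
    and e1: "e1 \<ge> 0" and e2: "e2 \<ge> 0"
  shows "\<bar>apply_bcontfun (tauhat f (fst q) (snd q)) x - tau x - apply_bcontfun (Ld (\<phi>, \<delta>) (pminus q (\<phi>, \<delta>))) x\<bar>
     \<le> ((Lf * E * rr q + e2) * C1 * rr q + e1 * E * A0 * rr q) / m"
proof -
  define \<psi> where "\<psi> = fst q"
  define r where "r = rr q"
  define \<sigma> where "\<sigma> = apply_bcontfun (tauhat f (fst q) (snd q)) x"
  define \<tau> where "\<tau> = tau x"
  define a where "a = apply_bcontfun (f (phibar \<phi> (- \<tau>))) x"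
  define \<rho> where "\<rho> = (\<lambda>t. \<psi> t - \<phi> t)"
  have \<psi>B: "\<psi> \<in> BUC \<alpha>" using qB[OF q] by (simp add: \<psi>_def)
  have r0: "r \<ge> 0" using rr_nonneg[OF q] by (simp add: r_def)
  have \<rho>c: "continuous_on UNIV (phibar \<rho>)"
    using continuous_on_diff[OF BUC_cont[OF \<psi>B] BUC_cont[OF phiB]] by (simp add: \<rho>_def phibar_diff[abs_def])
  have fstpm: "fst (pminus q (\<phi>, \<delta>)) = \<rho>" by (simp add: pminus_def \<rho>_def \<psi>_def)
  have Lx: "apply_bcontfun (Ld (\<phi>, \<delta>) (pminus q (\<phi>, \<delta>))) x
      = ((apply_bcontfun (snd q) x - apply_bcontfun \<delta> x) - Lam \<phi> \<rho> x \<tau>) / a"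
    using Ld_eval[OF phiB, of "pminus q (\<phi>, \<delta>)" \<delta> x] \<rho>c fstpm
    by (simp add: pminus_def a_def \<tau>_def)
  have S: "G \<psi> x \<sigma> = apply_bcontfun (snd q) x" "\<sigma> < T" "\<bar>\<sigma> - \<tau>\<bar> \<le> C1 * r"
    using sig[OF q r1 r2, of x] by (simp_all add: \<psi>_def \<sigma>_def \<tau>_def r_def)
  have Tt: "G \<phi> x \<tau> = apply_bcontfun \<delta> x" "\<tau> < T" "\<bar>\<tau>\<bar> \<le> A0"
    using tau[of x] tau_abs[of x] by (simp_all add: \<tau>_def)
  have t2: "\<bar>(G \<psi> x \<tau> - G \<phi> x \<tau> - Lam \<phi> \<rho> x \<tau>) - (G \<psi> x 0 - G \<phi> x 0 - Lam \<phi> \<rho> x 0)\<bar> \<le> (e1 * E * r) * \<bar>\<tau> - 0\<bar>"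
  proof (rule deriv_bound_seg)
    fix u
    show "((\<lambda>t. G \<psi> x t - G \<phi> x t - Lam \<phi> \<rho> x t) has_real_derivative
       apply_bcontfun (f (phibar \<psi> (-u))) x - apply_bcontfun (f (phibar \<phi> (-u))) x
       - apply_bcontfun (blinfun_apply (f' (phibar \<phi> (-u))) (phibar \<rho> (-u))) x) (at u)"
      by (intro DERIV_diff G_deriv Lam_deriv \<psi>B phiB \<rho>c)
  next
    fix u assume "min 0 \<tau> \<le> u" "u \<le> max 0 \<tau>"
    then have u: "-u \<ge> -T" using Tt T by auto
    have "\<bar>apply_bcontfun (f (phibar \<psi> (-u))) x - apply_bcontfun (f (phibar \<phi> (-u))) x
       - apply_bcontfun (blinfun_apply (f' (phibar \<phi> (-u))) (phibar \<rho> (-u))) x\<bar>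
      = \<bar>apply_bcontfun (f (phibar \<psi> (-u)) - f (phibar \<phi> (-u))
         - blinfun_apply (f' (phibar \<phi> (-u))) (phibar \<psi> (-u) - phibar \<phi> (-u))) x\<bar>"
      by (simp add: \<rho>_def phibar_diff)
    also have "\<dots> \<le> norm (f (phibar \<psi> (-u)) - f (phibar \<phi> (-u))
         - blinfun_apply (f' (phibar \<phi> (-u))) (phibar \<psi> (-u) - phibar \<phi> (-u)))" by (rule abs_eval_le)
    also have "\<dots> \<le> e1 * norm (phibar \<psi> (-u) - phibar \<phi> (-u))" using ud[OF u] by (simp add: \<psi>_def)
    also have "\<dots> \<le> e1 * (E * r)" using bar_diff[OF q u] e1 by (intro mult_left_mono) (auto simp: \<psi>_def r_def)
    finally show "\<bar>apply_bcontfun (f (phibar \<psi> (-u))) x - apply_bcontfun (f (phibar \<phi> (-u))) x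
       - apply_bcontfun (blinfun_apply (f' (phibar \<phi> (-u))) (phibar \<rho> (-u))) x\<bar> \<le> e1 * E * r"
      by (simp add: mult.assoc)
  qed
  have t2': "\<bar>G \<psi> x \<tau> - G \<phi> x \<tau> - Lam \<phi> \<rho> x \<tau>\<bar> \<le> e1 * E * r * A0"
  proof -
    have "\<bar>G \<psi> x \<tau> - G \<phi> x \<tau> - Lam \<phi> \<rho> x \<tau>\<bar> \<le> e1 * E * r * \<bar>\<tau>\<bar>"
      using t2 by (simp add: G_zero Lam_def PK_zero)
    also have "\<dots> \<le> e1 * E * r * A0" using Tt(3) e1 E0 r0 by (intro mult_left_mono) auto
    finally show ?thesis .
  qed
  have t1: "\<bar>(G \<psi> x \<sigma> - a * \<sigma>) - (G \<psi> x \<tau> - a * \<tau>)\<bar> \<le> (Lf * E * r + e2) * \<bar>\<sigma> - \<tau>\<bar>"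
  proof (rule deriv_bound_seg)
    fix u
    show "((\<lambda>t. G \<psi> x t - a * t) has_real_derivative apply_bcontfun (f (phibar \<psi> (-u))) x - a) (at u)"
      by (intro DERIV_diff G_deriv \<psi>B DERIV_cmult_right) (auto intro: derivative_eq_intros)
  next
    fix u assume u1: "min \<tau> \<sigma> \<le> u" "u \<le> max \<tau> \<sigma>"
    then have u: "-u \<ge> -T" using Tt S by auto
    have "\<bar>u - \<tau>\<bar> \<le> \<bar>\<sigma> - \<tau>\<bar>" using u1 by auto
    then have "\<bar>u - tau x\<bar> \<le> C1 * rr q" using S by (simp add: \<tau>_def r_def)
    then have "\<bar>apply_bcontfun (f (phibar \<phi> (-u))) x - a\<bar> \<le> e2" using uc by (simp add: a_def \<tau>_def)
    moreover have "\<bar>apply_bcontfun (f (phibar \<psi> (-u))) x - apply_bcontfun (f (phibar \<phi> (-u))) x\<bar> \<le> Lf * E * r"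
      using kdiff[OF q u, of x] by (simp add: \<psi>_def r_def)
    ultimately show "\<bar>apply_bcontfun (f (phibar \<psi> (-u))) x - a\<bar> \<le> Lf * E * r + e2" by linarith
  qed
  have t1': "\<bar>G \<psi> x \<sigma> - G \<psi> x \<tau> - a * (\<sigma> - \<tau>)\<bar> \<le> (Lf * E * r + e2) * C1 * r"
  proof -
    have "\<bar>G \<psi> x \<sigma> - G \<psi> x \<tau> - a * (\<sigma> - \<tau>)\<bar> \<le> (Lf * E * r + e2) * \<bar>\<sigma> - \<tau>\<bar>"
      using t1 by (simp add: algebra_simps)
    also have "\<dots> \<le> (Lf * E * r + e2) * (C1 * r)"
      using S(3) Lf_nonneg E0 r0 e2 by (intro mult_left_mono) auto
    finally show ?thesis by (simp add: mult.assoc)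
  qed
  have key: "\<sigma> - \<tau> - ((apply_bcontfun (snd q) x - apply_bcontfun \<delta> x) - Lam \<phi> \<rho> x \<tau>) / a
      = (a * (\<sigma> - \<tau>) - ((G \<psi> x \<sigma> - G \<psi> x \<tau>) + (G \<psi> x \<tau> - G \<phi> x \<tau> - Lam \<phi> \<rho> x \<tau>))) / a"
  proof -
    have a0: "a \<noteq> 0" using fpos[of _ x] by (simp add: a_def) (metis less_irrefl)
    show ?thesis using a0 S(1) Tt(1) by (simp add: field_simps)
  qed
  have num: "\<bar>a * (\<sigma> - \<tau>) - ((G \<psi> x \<sigma> - G \<psi> x \<tau>) + (G \<psi> x \<tau> - G \<phi> x \<tau> - Lam \<phi> \<rho> x \<tau>))\<bar>
      \<le> (Lf * E * r + e2) * C1 * r + e1 * E * A0 * r"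
    using t1' t2' by (simp add: algebra_simps)
  have "\<bar>\<sigma> - \<tau> - ((apply_bcontfun (snd q) x - apply_bcontfun \<delta> x) - Lam \<phi> \<rho> x \<tau>) / a\<bar>
     \<le> ((Lf * E * r + e2) * C1 * r + e1 * E * A0 * r) / m"
    unfolding key by (rule div_bound[OF num]) (simp add: a_def \<tau>_def den_low)
  then show ?thesis by (simp add: Lx \<sigma>_def \<tau>_def r_def)
qed

definition Cset where "Cset = phibar \<phi> ` {-T..0}"
lemma Cset: "compact Cset"
  unfolding Cset_def by (rule compact_continuous_image[OF continuous_on_subset[OF BUC_cont[OF phiB]]]) auto
lemma inCset: "s \<ge> -T \<Longrightarrow> phibar \<phi> s \<in> Cset"
proof -
  assume s: "s \<ge> -T"
  have "phibar \<phi> s = phibar \<phi> (min s 0)" by (simp add: phibar_def min_def)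
  moreover have "min s 0 \<in> {-T..0}" using s T by auto
  ultimately show ?thesis unfolding Cset_def by blast
qed

lemma DX: "q \<in> Dtau f \<alpha> \<Longrightarrow> q \<in> Xsp \<alpha>"
  by (cases q) (auto simp: Dtau_def Xsp_def)

lemma small_r:
  assumes q: "q \<in> Xsp \<alpha>" and r: "rr q < min (\<eta> / (1 + T * Lf * E)) (m / (2 * (Lf * E + 1)))"
  shows "rr q * (1 + T * Lf * E) < \<eta>" "Lf * E * rr q \<le> m / 2"
proof -
  have p1: "1 + T * Lf * E > 0" using T Lf_nonneg E0 by (simp add: add_pos_nonneg)
  have p2: "Lf * E + 1 > 0" using Lf_nonneg E0 by (simp add: add_nonneg_pos)
  have r0: "rr q \<ge> 0" by (rule rr_nonneg[OF q])
  show "rr q * (1 + T * Lf * E) < \<eta>" using r p1 by (simp add: pos_less_divide_eq)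
  have "rr q * (Lf * E + 1) < m / 2" using r p2 by (auto simp: pos_less_divide_eq algebra_simps)
  moreover have "Lf * E * rr q \<le> rr q * (Lf * E + 1)" using r0 by (simp add: algebra_simps)
  ultimately show "Lf * E * rr q \<le> m / 2" by linarith
qed

lemma frechet: "frechet_X \<alpha> (\<lambda>p. tauhat f (fst p) (snd p)) (Dtau f \<alpha>) (\<phi>, \<delta>) (Ld (\<phi>, \<delta>))"
  unfolding frechet_X_def
proof (intro conjI Ld_blX allI impI)
  fix e :: real assume e: "e > 0"
  define e1 where "e1 = e * m / (3 * E * A0)"
  have e1: "e1 > 0" using e m E0 A0 by (simp add: e1_def)
  obtain \<rho>3 where \<rho>3: "\<rho>3 > 0" "\<And>z y. z \<in> Cset \<Longrightarrow> norm (y - z) < \<rho>3 \<Longrightarrow>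
      norm (f y - f z - blinfun_apply (f' z) (y - z)) \<le> e1 * norm (y - z)"
    using unif_diff[OF Cset e1] by blast
  define e2 where "e2 = e * m / (3 * C1)"
  have e2: "e2 > 0" using e m C1 by (simp add: e2_def)
  obtain \<rho>2 where \<rho>2: "\<rho>2 > 0" "\<And>z y. z \<in> {-T..A0} \<Longrightarrow> dist y z < \<rho>2 \<Longrightarrow>
      dist (f (phibar \<phi> y)) (f (phibar \<phi> z)) < e2"
    using unif_cont_near_compact[OF kernel_cont[OF phiB] compact_Icc e2, of "-T" A0] by blast
  define d where "d = min (min (\<eta> / (1 + T * Lf * E)) (m / (2 * (Lf * E + 1))))
      (min (min (\<rho>3 / E) (\<rho>2 / C1)) (e * m / (3 * C1 * (Lf * E + 1))))"
  have p1: "1 + T * Lf * E > 0" using T Lf_nonneg E0 by (simp add: add_pos_nonneg)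
  have p2: "Lf * E + 1 > 0" using Lf_nonneg E0 by (simp add: add_nonneg_pos)
  have d: "d > 0" unfolding d_def using \<eta> p1 p2 m \<rho>3 \<rho>2 E0 C1 e by simp
  show "\<exists>d>0. \<forall>q\<in>Dtau f \<alpha>. pnorm \<alpha> (pminus q (\<phi>, \<delta>)) < d \<longrightarrow>
      norm (tauhat f (fst q) (snd q) - tauhat f (fst (\<phi>, \<delta>)) (snd (\<phi>, \<delta>)) - Ld (\<phi>, \<delta>) (pminus q (\<phi>, \<delta>)))
        \<le> e * pnorm \<alpha> (pminus q (\<phi>, \<delta>))"
  proof (intro exI[of _ d] conjI ballI impI d)
    fix q assume qD: "q \<in> Dtau f \<alpha>" and rq: "pnorm \<alpha> (pminus q (\<phi>, \<delta>)) < d"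
    have q: "q \<in> Xsp \<alpha>" by (rule DX[OF qD])
    define r where "r = rr q"
    have rd: "r < d" using rq by (simp add: r_def rr_def)
    have r0: "r \<ge> 0" using rr_nonneg[OF q] by (simp add: r_def)
    have sm: "rr q * (1 + T * Lf * E) < \<eta>" "Lf * E * rr q \<le> m / 2"
      using small_r[OF q] rd by (simp_all add: r_def d_def)
    have rE: "E * r < \<rho>3" using rd E0 by (simp add: d_def pos_less_divide_eq mult.commute)
    have rC: "C1 * r < \<rho>2" using rd C1 by (simp add: d_def pos_less_divide_eq mult.commute)
    have rS: "(Lf * E + 1) * C1 * r < e * m / 3"
    proof -
      have "r < e * m / (3 * C1 * (Lf * E + 1))" using rd by (simp add: d_def)
      then have "r * (3 * C1 * (Lf * E + 1)) < e * m" using C1 p2 by (simp add: pos_less_divide_eq)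
      then show ?thesis by (simp add: algebra_simps)
    qed
    have pt: "\<bar>apply_bcontfun (tauhat f (fst q) (snd q)) x - tau x - apply_bcontfun (Ld (\<phi>, \<delta>) (pminus q (\<phi>, \<delta>))) x\<bar>
     \<le> ((Lf * E * r + e2) * C1 * r + e1 * E * A0 * r) / m" for x
      unfolding r_def
    proof (rule frechet_pt[OF q sm _ _ less_imp_le[OF e1] less_imp_le[OF e2]])
      fix s assume s: "s \<ge> -T"
      show "norm (f (phibar (fst q) s) - f (phibar \<phi> s)
        - blinfun_apply (f' (phibar \<phi> s)) (phibar (fst q) s - phibar \<phi> s)) \<le> e1 * norm (phibar (fst q) s - phibar \<phi> s)"
        using \<rho>3(2)[OF inCset[OF s], of "phibar (fst q) s"] bar_diff[OF q s] rE by (simp add: r_def)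
    next
      fix u assume u: "\<bar>u - tau x\<bar> \<le> C1 * rr q"
      have "- tau x \<in> {-T..A0}" using tau(2)[of x] tau_abs[of x] by auto
      moreover have "dist (-u) (- tau x) < \<rho>2" using u rC by (simp add: dist_real_def r_def abs_minus_commute)
      ultimately have "dist (f (phibar \<phi> (-u))) (f (phibar \<phi> (- tau x))) < e2" by (rule \<rho>2(2))
      then have "norm (f (phibar \<phi> (-u)) - f (phibar \<phi> (- tau x))) < e2" by (simp add: dist_norm)
      then show "\<bar>apply_bcontfun (f (phibar \<phi> (-u))) x - apply_bcontfun (f (phibar \<phi> (- tau x))) x\<bar> \<le> e2"
        using abs_eval_le[of "f (phibar \<phi> (-u)) - f (phibar \<phi> (- tau x))" x] by simp
    qed
    have bnd: "((Lf * E * r + e2) * C1 * r + e1 * E * A0 * r) / m \<le> e * r"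
    proof -
      have a1: "Lf * E * r * C1 * r \<le> (Lf * E + 1) * C1 * r * r"
        using r0 C1 Lf_nonneg E0 by (simp add: algebra_simps mult_nonneg_nonneg)
      have a2: "(Lf * E + 1) * C1 * r * r \<le> e * m / 3 * r"
        using rS r0 by (intro mult_right_mono) auto
      have a3: "e2 * C1 * r = e * m / 3 * r" using C1 by (simp add: e2_def)
      have a4: "e1 * E * A0 * r = e * m / 3 * r" using E0 A0 by (simp add: e1_def)
      have a5: "(Lf * E * r + e2) * C1 * r = Lf * E * r * C1 * r + e2 * C1 * r" by (simp add: algebra_simps)
      have a6: "e * m / 3 * r = (e * m * r) / 3" by simp
      have "(Lf * E * r + e2) * C1 * r + e1 * E * A0 * r \<le> e * m * r"
        using a1 a2 a3 a4 a5 a6 by linarith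
      then show ?thesis using m by (simp add: pos_divide_le_eq algebra_simps)
    qed
    show "norm (tauhat f (fst q) (snd q) - tauhat f (fst (\<phi>, \<delta>)) (snd (\<phi>, \<delta>)) - Ld (\<phi>, \<delta>) (pminus q (\<phi>, \<delta>)))
        \<le> e * pnorm \<alpha> (pminus q (\<phi>, \<delta>))"
    proof (rule norm_bound)
      fix x
      show "norm (apply_bcontfun (tauhat f (fst q) (snd q) - tauhat f (fst (\<phi>, \<delta>)) (snd (\<phi>, \<delta>)) - Ld (\<phi>, \<delta>) (pminus q (\<phi>, \<delta>))) x)
          \<le> e * pnorm \<alpha> (pminus q (\<phi>, \<delta>))"
        using pt[of x] bnd by (simp add: r_def rr_def)
    qed
  qed
qed

lemma div_bound2:
  fixes n N d c :: real
  assumes "\<bar>n\<bar> \<le> N" "d \<ge> c" "c > 0"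
  shows "\<bar>n / d\<bar> \<le> N / c"
proof -
  have d0: "d > 0" using assms by linarith
  have N0: "N \<ge> 0" using assms(1) by linarith
  have "\<bar>n / d\<bar> = \<bar>n\<bar> / d" using d0 by simp
  also have "\<dots> \<le> N / d" using assms d0 by (intro divide_right_mono) auto
  also have "\<dots> \<le> N / c" using N0 assms by (intro divide_left_mono) auto
  finally show ?thesis .
qed

lemma zero_X: "(((\<lambda>t. 0) :: 'a hist), (0 :: ('a, real) bcontfun)) \<in> Xsp \<alpha>"
proof -
  have 1: "(\<lambda>t::real. exp (- \<alpha> * \<bar>t\<bar>) *\<^sub>R (0::('a, real) bcontfun)) ` {..0} = {0}" by auto
  have 2: "bounded ((\<lambda>t::real. exp (- \<alpha> * \<bar>t\<bar>) *\<^sub>R (0::('a, real) bcontfun)) ` {..0})"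
    unfolding 1 by simp
  have 3: "uniformly_continuous_on {..0} (\<lambda>t::real. exp (- \<alpha> * \<bar>t\<bar>) *\<^sub>R (0::('a, real) bcontfun))"
    by (simp add: uniformly_continuous_on_const)
  have 4: "continuous_on {..0} (\<lambda>t::real. (0::('a, real) bcontfun))" by (rule continuous_on_const)
  show ?thesis unfolding Xsp_def BUC_def using 2 3 4 by blast
qed

lemma opnorm_le:
  fixes L :: "'a hist \<times> ('a, real) bcontfun \<Rightarrow> ('a, real) bcontfun"
  assumes H: "\<And>h. h \<in> Xsp \<alpha> \<Longrightarrow> pnorm \<alpha> h \<le> 1 \<Longrightarrow> norm (L h) \<le> e"
  shows "opnorm_X \<alpha> L \<le> e"
  unfolding opnorm_X_def
proof (rule cSUP_least)
  have "(SUP t\<in>{..(0::real)}. (0::real)) = 0" by (rule cSUP_const) auto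
  then have "pnorm \<alpha> (((\<lambda>t. 0) :: 'a hist), (0 :: ('a, real) bcontfun)) = 0"
    unfolding pnorm_def buc_norm_def by simp
  then have "(((\<lambda>t. 0) :: 'a hist), (0 :: ('a, real) bcontfun)) \<in> {p \<in> (Xsp \<alpha> :: ('a hist \<times> ('a, real) bcontfun) set). pnorm \<alpha> p \<le> 1}"
    using zero_X by simp
  then show "{p \<in> (Xsp \<alpha> :: ('a hist \<times> ('a, real) bcontfun) set). pnorm \<alpha> p \<le> 1} \<noteq> {}" using equals0D by metis
next
  fix h :: "'a hist \<times> ('a, real) bcontfun" assume h: "h \<in> {p \<in> (Xsp \<alpha> :: ('a hist \<times> ('a, real) bcontfun) set). pnorm \<alpha> p \<le> 1}"
  then have "h \<in> Xsp \<alpha>" "pnorm \<alpha> h \<le> 1" by simp_all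
  then show "norm (L h) \<le> e" by (rule H)
qed

lemma cont_pt:
  assumes q: "q \<in> Xsp \<alpha>" and r1: "rr q * (1 + T * Lf * E) < \<eta>" and r2: "Lf * E * rr q \<le> m / 2"
    and h: "h \<in> Xsp \<alpha>" and P: "pnorm \<alpha> h \<le> 1"
    and uf': "\<And>s. s \<ge> -T \<Longrightarrow> norm (f' (phibar (fst q) s) - f' (phibar \<phi> s)) \<le> e3"
    and uc: "\<And>u. \<bar>u - tau x\<bar> \<le> C1 * rr q \<Longrightarrow>
        \<bar>apply_bcontfun (f (phibar \<phi> (-u))) x - apply_bcontfun (f (phibar \<phi> (- tau x))) x\<bar> \<le> e2"
    and C1r: "C1 * rr q \<le> 1" and e3: "e3 \<ge> 0" and e2: "e2 \<ge> 0"
  shows "\<bar>apply_bcontfun (Ld q h) x - apply_bcontfun (Ld (\<phi>, \<delta>) h) x\<bar>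
     \<le> (F1 * E * C1 * rr q + (A0 + 1) * e3 * E) / (m / 2) + (1 + F1 * E * A0) * (e2 + Lf * E * rr q) / (m / 2 * m)"
proof -
  define \<psi> where "\<psi> = fst q"
  define r where "r = rr q"
  define \<sigma> where "\<sigma> = apply_bcontfun (tauhat f (fst q) (snd q)) x"
  define \<tau> where "\<tau> = tau x"
  define ap where "ap = apply_bcontfun (f (phibar \<phi> (- \<tau>))) x"
  define aq where "aq = apply_bcontfun (f (phibar \<psi> (- \<sigma>))) x"
  define \<Lambda>p where "\<Lambda>p = Lam \<phi> (fst h) x \<tau>"
  define \<Lambda>q where "\<Lambda>q = Lam \<psi> (fst h) x \<sigma>"
  define \<eta>x where "\<eta>x = apply_bcontfun (snd h) x"
  define Pn where "Pn = pnorm \<alpha> h"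
  have \<psi>B: "\<psi> \<in> BUC \<alpha>" using qB[OF q] by (simp add: \<psi>_def)
  have r0: "r \<ge> 0" using rr_nonneg[OF q] by (simp add: r_def)
  have P0: "Pn \<ge> 0" using hdist(1)[OF h order_refl] by (simp add: Pn_def)
  have hc: "continuous_on UNIV (phibar (fst h))" by (rule Xcont[OF h])
  have S: "G \<psi> x \<sigma> = apply_bcontfun (snd q) x" "\<sigma> < T" "\<bar>\<sigma> - \<tau>\<bar> \<le> C1 * r"
    using sig[OF q r1 r2, of x] by (simp_all add: \<psi>_def \<sigma>_def \<tau>_def r_def)
  have Tt: "\<tau> < T" "\<bar>\<tau>\<bar> \<le> A0" using tau[of x] tau_abs[of x] by (simp_all add: \<tau>_def)
  have \<sigma>A: "\<bar>\<sigma>\<bar> \<le> A0 + 1" using S(3) Tt(2) C1r unfolding r_def by linarith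
  have Lq: "apply_bcontfun (Ld q h) x = (\<eta>x - \<Lambda>q) / aq"
  proof -
    have "Ld q h = Ld (\<psi>, snd q) h" by (simp add: \<psi>_def)
    then show ?thesis using Ld_eval[OF \<psi>B hc, of "snd q" x]
      by (simp add: \<eta>x_def \<Lambda>q_def aq_def \<sigma>_def \<psi>_def)
  qed
  have Lp: "apply_bcontfun (Ld (\<phi>, \<delta>) h) x = (\<eta>x - \<Lambda>p) / ap"
    using Ld_ev[OF h, of x] by (simp add: \<eta>x_def \<Lambda>p_def ap_def \<tau>_def)
  have ap: "ap \<ge> m" using den_low[of x] by (simp add: ap_def \<tau>_def)
  have aq: "aq \<ge> m / 2" using near(2)[OF q r1 r2, of "- \<sigma>" x] S(2) by (simp add: aq_def \<psi>_def)
  have m2: "m / 2 > 0" using m by simp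
  have ap0: "ap \<noteq> 0" "aq \<noteq> 0" using ap aq m by auto
  have split: "(\<eta>x - \<Lambda>q) / aq - (\<eta>x - \<Lambda>p) / ap = (\<Lambda>p - \<Lambda>q) / aq + ((\<eta>x - \<Lambda>p) * (ap - aq)) / (aq * ap)"
    using ap0 by (simp add: field_simps)
  have N1: "\<bar>\<eta>x - \<Lambda>p\<bar> \<le> 1 + F1 * E * A0"
  proof -
    have "\<bar>\<Lambda>p\<bar> \<le> F1 * E * Pn * \<bar>\<tau>\<bar>" unfolding \<Lambda>p_def Pn_def by (rule Lam_bound[OF h less_imp_le[OF Tt(1)]])
    also have "\<dots> \<le> F1 * E * 1 * A0" using F1(1) E0 P0 P Tt(2) by (intro mult_mono) (auto simp: Pn_def)
    finally show ?thesis using hdist(3)[OF h order_refl, of x] P unfolding \<eta>x_def by linarith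
  qed
  have dL1: "\<bar>Lam \<phi> (fst h) x \<sigma> - Lam \<phi> (fst h) x \<tau>\<bar> \<le> (F1 * E * Pn) * \<bar>\<sigma> - \<tau>\<bar>"
    unfolding Lam_def
  proof (rule PK_lip[OF lam_kernel_cont[OF phiB hc]])
    fix u assume "min \<tau> \<sigma> \<le> u" "u \<le> max \<tau> \<sigma>"
    then have "-u \<ge> -T" using S Tt by auto
    then show "\<bar>apply_bcontfun (blinfun_apply (f' (phibar \<phi> (- u))) (phibar (fst h) (- u))) x\<bar> \<le> F1 * E * Pn"
      unfolding Pn_def by (rule lam_kernel_bound[OF h])
  qed
  have dL2: "\<bar>(Lam \<phi> (fst h) x \<sigma> - Lam \<psi> (fst h) x \<sigma>) - (Lam \<phi> (fst h) x 0 - Lam \<psi> (fst h) x 0)\<bar> \<le> (e3 * E * Pn) * \<bar>\<sigma> - 0\<bar>"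
  proof (rule deriv_bound_seg)
    fix u
    show "((\<lambda>t. Lam \<phi> (fst h) x t - Lam \<psi> (fst h) x t) has_real_derivative
       apply_bcontfun (blinfun_apply (f' (phibar \<phi> (-u))) (phibar (fst h) (-u))) x
       - apply_bcontfun (blinfun_apply (f' (phibar \<psi> (-u))) (phibar (fst h) (-u))) x) (at u)"
      by (intro DERIV_diff Lam_deriv phiB \<psi>B hc)
  next
    fix u assume "min 0 \<sigma> \<le> u" "u \<le> max 0 \<sigma>"
    then have u: "-u \<ge> -T" using S T by auto
    have "\<bar>apply_bcontfun (blinfun_apply (f' (phibar \<phi> (-u))) (phibar (fst h) (-u))) x
       - apply_bcontfun (blinfun_apply (f' (phibar \<psi> (-u))) (phibar (fst h) (-u))) x\<bar>
      = \<bar>apply_bcontfun (blinfun_apply (f' (phibar \<phi> (-u)) - f' (phibar \<psi> (-u))) (phibar (fst h) (-u))) x\<bar>"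
      by (simp add: blinfun.diff_left)
    also have "\<dots> \<le> norm (blinfun_apply (f' (phibar \<phi> (-u)) - f' (phibar \<psi> (-u))) (phibar (fst h) (-u)))"
      by (rule abs_eval_le)
    also have "\<dots> \<le> norm (f' (phibar \<phi> (-u)) - f' (phibar \<psi> (-u))) * norm (phibar (fst h) (-u))"
      by (rule norm_blinfun)
    also have "\<dots> \<le> e3 * (E * Pn)"
      using uf'[OF u] hdist(2)[OF h less_imp_le[OF T] u] e3
      by (intro mult_mono) (auto simp: \<psi>_def norm_minus_commute E_def Pn_def)
    finally show "\<bar>apply_bcontfun (blinfun_apply (f' (phibar \<phi> (-u))) (phibar (fst h) (-u))) x
       - apply_bcontfun (blinfun_apply (f' (phibar \<psi> (-u))) (phibar (fst h) (-u))) x\<bar> \<le> e3 * E * Pn"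
      by (simp add: mult.assoc)
  qed
  have dL: "\<bar>\<Lambda>p - \<Lambda>q\<bar> \<le> F1 * E * C1 * r + (A0 + 1) * e3 * E"
  proof -
    have "\<bar>Lam \<phi> (fst h) x \<sigma> - Lam \<psi> (fst h) x \<sigma>\<bar> \<le> e3 * E * Pn * \<bar>\<sigma>\<bar>"
      using dL2 by (simp add: Lam_def PK_zero)
    also have "\<dots> \<le> e3 * E * 1 * (A0 + 1)" using e3 E0 P0 P \<sigma>A by (intro mult_mono) (auto simp: Pn_def)
    finally have 1: "\<bar>Lam \<phi> (fst h) x \<sigma> - Lam \<psi> (fst h) x \<sigma>\<bar> \<le> e3 * E * (A0 + 1)" by simp
    have "(F1 * E * Pn) * \<bar>\<sigma> - \<tau>\<bar> \<le> (F1 * E * 1) * (C1 * r)"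
      using F1(1) E0 P0 P S(3) by (intro mult_mono) (auto simp: Pn_def)
    then have 2: "\<bar>Lam \<phi> (fst h) x \<sigma> - Lam \<phi> (fst h) x \<tau>\<bar> \<le> F1 * E * C1 * r" using dL1 by (simp add: mult.assoc)
    have 3: "(A0 + 1) * e3 * E = e3 * E * (A0 + 1)" by (simp add: algebra_simps)
    show ?thesis using 1 2 3 unfolding \<Lambda>p_def \<Lambda>q_def by linarith
  qed
  have da: "\<bar>ap - aq\<bar> \<le> e2 + Lf * E * r"
  proof -
    have "\<bar>\<sigma> - tau x\<bar> \<le> C1 * rr q" using S(3) by (simp add: \<tau>_def r_def)
    then have 1: "\<bar>apply_bcontfun (f (phibar \<phi> (-\<sigma>))) x - ap\<bar> \<le> e2" using uc by (simp add: ap_def \<tau>_def)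
    have 2: "\<bar>aq - apply_bcontfun (f (phibar \<phi> (-\<sigma>))) x\<bar> \<le> Lf * E * r"
      using kdiff[OF q, of "-\<sigma>" x] S(2) by (simp add: aq_def \<psi>_def r_def)
    show ?thesis using 1 2 by linarith
  qed
  have tA: "\<bar>(\<Lambda>p - \<Lambda>q) / aq\<bar> \<le> (F1 * E * C1 * r + (A0 + 1) * e3 * E) / (m / 2)"
    by (rule div_bound2[OF dL aq m2])
  have tB: "\<bar>((\<eta>x - \<Lambda>p) * (ap - aq)) / (aq * ap)\<bar> \<le> (1 + F1 * E * A0) * (e2 + Lf * E * r) / (m / 2 * m)"
  proof (rule div_bound2)
    show "\<bar>(\<eta>x - \<Lambda>p) * (ap - aq)\<bar> \<le> (1 + F1 * E * A0) * (e2 + Lf * E * r)"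
    proof -
      have "0 \<le> 1 + F1 * E * A0" using F1(1) E0 A0 by (intro add_nonneg_nonneg mult_nonneg_nonneg) auto
      then show ?thesis unfolding abs_mult by (intro mult_mono N1 da) auto
    qed
    show "aq * ap \<ge> m / 2 * m" using aq ap m by (intro mult_mono) auto
    show "m / 2 * m > 0" using m by simp
  qed
  show ?thesis unfolding Lq Lp split r_def[symmetric] using tA tB by linarith
qed

lemma Lcont:
  assumes e: "e > 0"
  shows "\<exists>d>0. \<forall>q\<in>Dtau f \<alpha>. pnorm \<alpha> (pminus q (\<phi>, \<delta>)) < d \<longrightarrow>
     opnorm_X \<alpha> (\<lambda>h. Ld q h - Ld (\<phi>, \<delta>) h) \<le> e"
proof -
  define N1 where "N1 = 1 + F1 * E * A0"
  have N1: "N1 > 0" using F1(1) E0 A0 by (simp add: N1_def add_pos_nonneg)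
  define e3 where "e3 = e * m / (8 * E * (A0 + 1))"
  have e3: "e3 > 0" using e m E0 A0 by (simp add: e3_def add_pos_pos)
  obtain \<rho>3 where \<rho>3: "\<rho>3 > 0" "\<And>z y. z \<in> Cset \<Longrightarrow> norm (y - z) < \<rho>3 \<Longrightarrow> norm (f' y - f' z) < e3"
    using unif_diff[OF Cset e3] by blast
  define e2 where "e2 = e * m * m / (8 * N1)"
  have e2: "e2 > 0" using e m N1 by (simp add: e2_def)
  obtain \<rho>2 where \<rho>2: "\<rho>2 > 0" "\<And>z y. z \<in> {-T..A0} \<Longrightarrow> dist y z < \<rho>2 \<Longrightarrow>
      dist (f (phibar \<phi> y)) (f (phibar \<phi> z)) < e2"
    using unif_cont_near_compact[OF kernel_cont[OF phiB] compact_Icc e2, of "-T" A0] by blast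
  have p1: "1 + T * Lf * E > 0" using T Lf_nonneg E0 by (simp add: add_pos_nonneg)
  have p2: "Lf * E + 1 > 0" using Lf_nonneg E0 by (simp add: add_nonneg_pos)
  define d where "d = min (min (\<eta> / (1 + T * Lf * E)) (m / (2 * (Lf * E + 1))))
      (min (min (\<rho>3 / E) (\<rho>2 / C1)) (min (1 / C1) (min (e * m / (8 * F1 * E * C1)) (e * m * m / (8 * N1 * (Lf * E + 1))))))"
  have d: "d > 0" unfolding d_def using \<eta> p1 p2 m \<rho>3 \<rho>2 E0 C1 e F1(1) N1 by simp
  show ?thesis
  proof (intro exI[of _ d] conjI ballI impI d)
    fix q assume qD: "q \<in> Dtau f \<alpha>" and rq: "pnorm \<alpha> (pminus q (\<phi>, \<delta>)) < d"
    have q: "q \<in> Xsp \<alpha>" by (rule DX[OF qD])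
    define r where "r = rr q"
    have rd: "r < d" using rq by (simp add: r_def rr_def)
    have r0: "r \<ge> 0" using rr_nonneg[OF q] by (simp add: r_def)
    have sm: "rr q * (1 + T * Lf * E) < \<eta>" "Lf * E * rr q \<le> m / 2"
      using small_r[OF q] rd by (simp_all add: r_def d_def)
    have rE: "E * r < \<rho>3" using rd E0 by (simp add: d_def pos_less_divide_eq mult.commute)
    have rC: "C1 * r < \<rho>2" using rd C1 by (simp add: d_def pos_less_divide_eq mult.commute)
    have rC1: "C1 * r \<le> 1" using rd C1 by (simp add: d_def pos_less_divide_eq mult.commute)
    have rF: "F1 * E * C1 * r < e * m / 8"
    proof -
      have "r < e * m / (8 * F1 * E * C1)" using rd by (simp add: d_def)
      then have "r * (8 * F1 * E * C1) < e * m" using C1 F1(1) E0 by (simp add: pos_less_divide_eq)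
      then show ?thesis by (simp add: algebra_simps)
    qed
    have rN: "N1 * (Lf * E + 1) * r < e * m * m / 8"
    proof -
      have "r < e * m * m / (8 * N1 * (Lf * E + 1))" using rd by (simp add: d_def)
      then have "r * (8 * N1 * (Lf * E + 1)) < e * m * m" using N1 p2 by (simp add: pos_less_divide_eq)
      then show ?thesis by (simp add: algebra_simps)
    qed
    show "opnorm_X \<alpha> (\<lambda>h. Ld q h - Ld (\<phi>, \<delta>) h) \<le> e"
    proof (rule opnorm_le)
      fix h :: "'a hist \<times> ('a, real) bcontfun" assume h: "h \<in> Xsp \<alpha>" and P: "pnorm \<alpha> h \<le> 1"
      show "norm (Ld q h - Ld (\<phi>, \<delta>) h) \<le> e"
      proof (rule norm_bound)
        fix x
        have pt: "\<bar>apply_bcontfun (Ld q h) x - apply_bcontfun (Ld (\<phi>, \<delta>) h) x\<bar>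
           \<le> (F1 * E * C1 * r + (A0 + 1) * e3 * E) / (m / 2) + N1 * (e2 + Lf * E * r) / (m / 2 * m)"
          unfolding r_def N1_def
        proof (rule cont_pt[OF q sm h P _ _ _ less_imp_le[OF e3] less_imp_le[OF e2]])
          fix s assume s: "s \<ge> -T"
          show "norm (f' (phibar (fst q) s) - f' (phibar \<phi> s)) \<le> e3"
            using \<rho>3(2)[OF inCset[OF s], of "phibar (fst q) s"] bar_diff[OF q s] rE by (simp add: r_def)
        next
          fix u assume u: "\<bar>u - tau x\<bar> \<le> C1 * rr q"
          have "- tau x \<in> {-T..A0}" using tau(2)[of x] tau_abs[of x] by auto
          moreover have "dist (-u) (- tau x) < \<rho>2" using u rC by (simp add: dist_real_def r_def abs_minus_commute)
          ultimately have "dist (f (phibar \<phi> (-u))) (f (phibar \<phi> (- tau x))) < e2" by (rule \<rho>2(2))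
          then have "norm (f (phibar \<phi> (-u)) - f (phibar \<phi> (- tau x))) < e2" by (simp add: dist_norm)
          then show "\<bar>apply_bcontfun (f (phibar \<phi> (-u))) x - apply_bcontfun (f (phibar \<phi> (- tau x))) x\<bar> \<le> e2"
            using abs_eval_le[of "f (phibar \<phi> (-u)) - f (phibar \<phi> (- tau x))" x] by simp
        next
          show "C1 * rr q \<le> 1" using rC1 by (simp add: r_def)
        qed
        have A: "F1 * E * C1 * r + (A0 + 1) * e3 * E \<le> e * m / 4"
        proof -
          have A01: "A0 + 1 > 0" using A0 by simp
          have "(A0 + 1) * e3 * E = e * m / 8" unfolding e3_def using E0 A01
            by (simp add: divide_simps)
          then show ?thesis using rF by linarith
        qed
        have A': "(F1 * E * C1 * r + (A0 + 1) * e3 * E) / (m / 2) \<le> e / 2"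
        proof -
          have "(F1 * E * C1 * r + (A0 + 1) * e3 * E) / (m / 2) \<le> (e * m / 4) / (m / 2)"
            using A m by (intro divide_right_mono) auto
          also have "\<dots> = e / 2" using m by (simp add: field_simps)
          finally show ?thesis .
        qed
        have B: "N1 * (e2 + Lf * E * r) \<le> e * m * m / 4"
        proof -
          have "N1 * e2 = e * m * m / 8" using N1 by (simp add: e2_def)
          moreover have "N1 * (Lf * E * r) \<le> N1 * (Lf * E + 1) * r"
            using N1 r0 by (simp add: algebra_simps)
          moreover have "N1 * (e2 + Lf * E * r) = N1 * e2 + N1 * (Lf * E * r)" by (simp only: distrib_left)
          moreover have "e * m * m / 8 + e * m * m / 8 = e * m * m / 4" by simp
          ultimately show ?thesis using rN by linarith
        qed
        have B': "N1 * (e2 + Lf * E * r) / (m / 2 * m) \<le> e / 2"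
        proof -
          have "N1 * (e2 + Lf * E * r) / (m / 2 * m) \<le> (e * m * m / 4) / (m / 2 * m)"
            using B m by (intro divide_right_mono) auto
          also have "\<dots> = e / 2" using m by (simp add: field_simps)
          finally show ?thesis .
        qed
        show "norm (apply_bcontfun (Ld q h - Ld (\<phi>, \<delta>) h) x) \<le> e"
          using pt A' B' unfolding minus_bcontfun.rep_eq real_norm_def by linarith
      qed
    qed
  qed
qed

end



context setting begin

lemma D_open: "open_X \<alpha> (Dtau f \<alpha>)"
  unfolding open_X_def
proof (intro conjI ballI)
  show "Dtau f \<alpha> \<subseteq> Xsp \<alpha>" by (auto simp: Dtau_def Xsp_def)
  fix p assume pD: "p \<in> Dtau f \<alpha>"
  obtain \<phi> \<delta> where p: "p = (\<phi>, \<delta>)" by (cases p)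
  obtain T m \<eta> where data: "T > 0" "m > 0" "\<eta> > 0" "\<forall>s x. s \<ge> -T \<longrightarrow> m \<le> apply_bcontfun (f (phibar \<phi> s)) x"
     "\<forall>x. apply_bcontfun \<delta> x + \<eta> \<le> G \<phi> x T"
    using point_data[of \<phi> \<delta>] pD p by blast
  interpret A: atp f f' \<alpha> Lf \<phi> \<delta> T m \<eta>
    by (intro atp.intro setting_axioms atp_axioms.intro) (use pD p data in auto)
  define d where "d = min (\<eta> / (1 + T * Lf * A.E)) (m / (2 * (Lf * A.E + 1)))"
  have p1: "1 + T * Lf * A.E > 0" using data Lf_nonneg A.E0 by (simp add: add_pos_nonneg)
  have p2: "Lf * A.E + 1 > 0" using Lf_nonneg A.E0 by (simp add: add_nonneg_pos)
  have d: "d > 0" using p1 p2 data by (simp add: d_def)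
  show "\<exists>e>0. \<forall>q\<in>Xsp \<alpha>. pnorm \<alpha> (pminus q p) < e \<longrightarrow> q \<in> Dtau f \<alpha>"
  proof (intro exI[of _ d] conjI ballI impI d)
    fix q assume q: "q \<in> Xsp \<alpha>" and r: "pnorm \<alpha> (pminus q p) < d"
    have "A.rr q < d" using r by (simp add: A.rr_def p)
    then have "A.rr q < min (\<eta> / (1 + T * Lf * A.E)) (m / (2 * (Lf * A.E + 1)))" by (simp add: d_def)
    note sm = A.small_r[OF q this]
    show "q \<in> Dtau f \<alpha>" by (rule A.near(1)[OF q sm])
  qed
qed

lemma C1_tau: "C1_on_X \<alpha> (\<lambda>p. tauhat f (fst p) (snd p)) (Dtau f \<alpha>)"
  unfolding C1_on_X_def
proof (intro exI[of _ Ld] conjI ballI allI impI)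
  fix p assume pD: "p \<in> Dtau f \<alpha>"
  obtain \<phi> \<delta> where p: "p = (\<phi>, \<delta>)" by (cases p)
  obtain T m \<eta> where data: "T > 0" "m > 0" "\<eta> > 0" "\<forall>s x. s \<ge> -T \<longrightarrow> m \<le> apply_bcontfun (f (phibar \<phi> s)) x"
     "\<forall>x. apply_bcontfun \<delta> x + \<eta> \<le> G \<phi> x T"
    using point_data[of \<phi> \<delta>] pD p by blast
  interpret A: atp f f' \<alpha> Lf \<phi> \<delta> T m \<eta>
    by (intro atp.intro setting_axioms atp_axioms.intro) (use pD p data in auto)
  show "frechet_X \<alpha> (\<lambda>p. tauhat f (fst p) (snd p)) (Dtau f \<alpha>) p (Ld p)"
    using A.frechet by (simp add: p)
next
  fix p and e :: real assume pD: "p \<in> Dtau f \<alpha>" and e: "e > 0"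
  obtain \<phi> \<delta> where p: "p = (\<phi>, \<delta>)" by (cases p)
  obtain T m \<eta> where data: "T > 0" "m > 0" "\<eta> > 0" "\<forall>s x. s \<ge> -T \<longrightarrow> m \<le> apply_bcontfun (f (phibar \<phi> s)) x"
     "\<forall>x. apply_bcontfun \<delta> x + \<eta> \<le> G \<phi> x T"
    using point_data[of \<phi> \<delta>] pD p by blast
  interpret A: atp f f' \<alpha> Lf \<phi> \<delta> T m \<eta>
    by (intro atp.intro setting_axioms atp_axioms.intro) (use pD p data in auto)
  show "\<exists>\<delta>>0. \<forall>q\<in>Dtau f \<alpha>. pnorm \<alpha> (pminus q p) < \<delta> \<longrightarrow> opnorm_X \<alpha> (\<lambda>h. Ld q h - Ld p h) \<le> e"
    using A.Lcont[OF e] by (simp add: p)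
qed

end

theorem lemma3p5:
  fixes f :: "('a::metric_space, real) bcontfun \<Rightarrow> ('a, real) bcontfun"
    and \<alpha> :: real
  assumes Omega_compact: "compact (UNIV :: 'a set)"
    and Omega_in_Rn: "\<exists>e :: 'a \<Rightarrow> 'n::euclidean_space. continuous_on UNIV e \<and> inj e"
    and alpha: "\<alpha> \<ge> 0"
    and f_lipschitz: "\<exists>K. K-lipschitz_on UNIV f"
    and f_bounds: "\<exists>M. \<forall>\<phi> x. 0 < apply_bcontfun (f \<phi>) x \<and> apply_bcontfun (f \<phi>) x \<le> M"
    and f_nonincr: "\<And>\<phi> \<psi>. (\<forall>x. apply_bcontfun \<phi> x \<le> apply_bcontfun \<psi> x) \<Longrightarrow>
                       (\<forall>x. apply_bcontfun (f \<psi>) x \<le> apply_bcontfun (f \<phi>) x)"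
    and f_C1: "\<exists>f'. (\<forall>\<phi>. (f has_derivative blinfun_apply (f' \<phi>)) (at \<phi>)) \<and> continuous_on UNIV f'"
  shows "open_X \<alpha> (Dtau f \<alpha>) \<and> C1_on_X \<alpha> (\<lambda>p. tauhat f (fst p) (snd p)) (Dtau f \<alpha>)"
proof -
  obtain Lf where lip: "Lf-lipschitz_on UNIV f" using f_lipschitz by blast
  obtain f' where fd: "\<And>\<phi>. (f has_derivative blinfun_apply (f' \<phi>)) (at \<phi>)" and fc: "continuous_on UNIV f'"
    using f_C1 by blast
  have pos: "\<And>\<phi> x. 0 < apply_bcontfun (f \<phi>) x" using f_bounds by blast
  interpret S: setting f f' \<alpha> Lf
    by (rule setting.intro) (use Omega_compact alpha lip pos fd fc in auto)
  show ?thesis using S.D_open S.C1_tau by blast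
qed

end
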